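(* Let $(\Gamma,\mathfrak o,\mathfrak m)$ be a Brauer graph with $\mathfrak m\equiv1$ and with no loops or multiple edges, and let $A_\Gamma$ be the associated Brauer graph algebra (with $\mathfrak q\equiv1$). If $L$ and $L'$ are nonsimple, nonprojective uniserial $A_\Gamma$-modules with $\mathrm{soc}(L)\cong\mathrm{soc}(L')$ and $\mathrm{top}(L)\cong\mathrm{top}(L')$, then $L\cong L'$.
   Context: Let $K$ be a field. A Brauer graph $(\Gamma,\mathfrak o,\mathfrak m)$ consists of a finite connected graph $\Gamma$ with at least one edge, a multiplicity function $\mathfrak m:\Gamma_0\to\mathbb Z_{>0}$ on the vertex set $\Gamma_0$, and, for each vertex $\alpha$, a cyclic ordering $\mathfrak o$ of the edges incident with $\alpha$. The valency $\mathrm{val}(\alpha)$ is the number of edges incident with $\alpha$. An edge $t$ is the successor of $s$ at $\alpha$ if $t$ directly follows $s$ in the cyclic ordering at $\alpha$ (if $\mathrm{val}(\alpha)=1$ the unique edge is its own successor). An edge $s$ is truncated at $\alpha$ if $\mathrm{val}(\alpha)=1$, $\mathfrak m(\alpha)=1$ and $s$ is the edge at $\alpha$. The successor sequence of $s$ at $\alpha$ is $s=s_0,s_1,\dots,s_{\mathrm{val}(\alpha)-1}$ with $s_{i+1}$ the successor of $s_i$ at $\alpha$. The Brauer graph algebra $A_\Gamma=KQ_\Gamma/I_\Gamma$ (paths left to right, right modules): if $\Gamma$ is a single edge with both endpoint multiplicities $1$, $A_\Gamma=K[x]/(x^2)$. Otherwise $Q_\Gamma$ has a vertex $v_s$ for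 each edge $s$, and an arrow $v_s\to v_t$ whenever $t$ is the successor of $s$ at a vertex $\alpha$ at which $s$ is not truncated. For $s$ at $\alpha$ not truncated at $\alpha$, with successor sequence $s_0,\dots,s_{v-1}$, $s_v=s_0$, let $C_{s,\alpha}=a_0\cdots a_{v-1}$ with $a_r$ the arrow $v_{s_r}\to v_{s_{r+1}}$ for this succession at $\alpha$. $I_\Gamma$ is generated by: type one, $C_{s,\alpha}^{\mathfrak m(\alpha)}-C_{s,\beta}^{\mathfrak m(\beta)}$ for each edge $s$ with endpoints $\alpha,\beta$ not truncated at either; type two, $C_{s,\beta}^{\mathfrak m(\beta)}b_0$ for each edge $s$ truncated at $\alpha$ with other endpoint $\beta$, where $C_{s,\beta}=b_0b_1\cdots$; type three, each length-two path $ab$ not a subpath of any $C_{t,\gamma}$. *)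

theory Defs
  imports Main
begin

text \<open>Since there are no loops and no
multiple edges, an edge is a two-element set of vertices. The cyclic ordering at a
vertex alpha is given by a successor function sigma alpha on the edges at alpha,
required to be a single cyclic permutation. The multiplicity function is identically 1
and is therefore not carried as a parameter.\<close>

type_synonym 'v arr = "'v set \<times> 'v"
type_synonym 'v qpath = "'v set \<times> ('v set \<times> 'v) list"
type_synonym ('v,'k) kq = "'v qpath \<Rightarrow> 'k"

definition edges_at :: "'v set set \<Rightarrow> 'v \<Rightarrow> 'v set set" where
  "edges_at E \<alpha> = {s\<in>E. \<alpha> \<in> s}"

definition val :: "'v set set \<Rightarrow> 'v \<Rightarrow> nat" where
  "val E \<alpha> = card (edges_at E \<alpha>)"

definition brauer_graph_simple_m1 ::
  "'v set \<Rightarrow> 'v set set \<Rightarrow> ('v \<Rightarrow> 'v set \<Rightarrow> 'v set) \<Rightarrow> bool" where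
  "brauer_graph_simple_m1 V E \<sigma> \<longleftrightarrow>
     finite V \<and> E \<noteq> {} \<and> (\<forall>s\<in>E. s \<subseteq> V \<and> card s = 2)
     \<and> (\<forall>\<alpha>\<in>V. \<forall>\<beta>\<in>V. (\<alpha>, \<beta>) \<in> {(x, y). {x, y} \<in> E}\<^sup>*)
     \<and> (\<forall>\<alpha>\<in>V. bij_betw (\<sigma> \<alpha>) (edges_at E \<alpha>) (edges_at E \<alpha>)
              \<and> (\<forall>s\<in>edges_at E \<alpha>. \<forall>t\<in>edges_at E \<alpha>. \<exists>n. (\<sigma> \<alpha> ^^ n) s = t))"

text \<open>With multiplicity one, s is truncated at alpha iff alpha is an endpoint of s and
val(alpha) = 1. The arrow (s, alpha) goes from v_s to v_(sigma alpha s). In the exceptional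
case of a single edge, Q has one vertex and a single loop.\<close>

definition single_edge :: "'v set set \<Rightarrow> 'v set" where
  "single_edge E = (THE s. s \<in> E)"

definition qarrows :: "'v set set \<Rightarrow> 'v arr set" where
  "qarrows E = (if card E = 1
      then {(single_edge E, SOME \<alpha>. \<alpha> \<in> single_edge E)}
      else {(s, \<alpha>). s \<in> E \<and> \<alpha> \<in> s \<and> val E \<alpha> \<noteq> 1})"

definition asrc :: "'v arr \<Rightarrow> 'v set" where
  "asrc a = fst a"

definition atgt :: "('v \<Rightarrow> 'v set \<Rightarrow> 'v set) \<Rightarrow> 'v arr \<Rightarrow> 'v set" where
  "atgt \<sigma> a = \<sigma> (snd a) (fst a)"

definition valid_path :: "'v set set \<Rightarrow> ('v \<Rightarrow> 'v set \<Rightarrow> 'v set) \<Rightarrow> 'v qpath \<Rightarrow> bool" where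
  "valid_path E \<sigma> p \<longleftrightarrow> fst p \<in> E \<and> set (snd p) \<subseteq> qarrows E
     \<and> (snd p \<noteq> [] \<longrightarrow> asrc (hd (snd p)) = fst p)
     \<and> (\<forall>i. Suc i < length (snd p) \<longrightarrow> atgt \<sigma> (snd p ! i) = asrc (snd p ! Suc i))"

definition path_end :: "('v \<Rightarrow> 'v set \<Rightarrow> 'v set) \<Rightarrow> 'v qpath \<Rightarrow> 'v set" where
  "path_end \<sigma> p = (if snd p = [] then fst p else atgt \<sigma> (last (snd p)))"

section \<open>The path algebra KQ (paths composed left to right)\<close>

definition kq_carrier :: "'v set set \<Rightarrow> ('v \<Rightarrow> 'v set \<Rightarrow> 'v set) \<Rightarrow> ('v,'k::field) kq set" where
  "kq_carrier E \<sigma> = {f. finite {p. f p \<noteq> 0} \<and> (\<forall>p. f p \<noteq> 0 \<longrightarrow> valid_path E \<sigma> p)}"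

definition kq_zero :: "('v,'k::field) kq" where
  "kq_zero = (\<lambda>_. 0)"

definition kq_add :: "('v,'k::field) kq \<Rightarrow> ('v,'k) kq \<Rightarrow> ('v,'k) kq" where
  "kq_add f g = (\<lambda>p. f p + g p)"

definition kq_diff :: "('v,'k::field) kq \<Rightarrow> ('v,'k) kq \<Rightarrow> ('v,'k) kq" where
  "kq_diff f g = (\<lambda>p. f p - g p)"

definition kq_smul :: "'k::field \<Rightarrow> ('v,'k) kq \<Rightarrow> ('v,'k) kq" where
  "kq_smul c f = (\<lambda>p. c * f p)"

definition kq_mult :: "'v set set \<Rightarrow> ('v \<Rightarrow> 'v set \<Rightarrow> 'v set) \<Rightarrow>
    ('v,'k::field) kq \<Rightarrow> ('v,'k) kq \<Rightarrow> ('v,'k) kq" where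
  "kq_mult E \<sigma> f g = (\<lambda>p. if valid_path E \<sigma> p then
      (\<Sum>k\<in>{..length (snd p)}. f (fst p, take k (snd p))
          * g (path_end \<sigma> (fst p, take k (snd p)), drop k (snd p)))
      else 0)"

definition kq_one :: "'v set set \<Rightarrow> ('v,'k::field) kq" where
  "kq_one E = (\<lambda>p. if fst p \<in> E \<and> snd p = [] then 1 else 0)"

definition path_elem :: "'v qpath \<Rightarrow> ('v,'k::field) kq" where
  "path_elem p = (\<lambda>q. if q = p then 1 else 0)"

definition cyc :: "'v set set \<Rightarrow> ('v \<Rightarrow> 'v set \<Rightarrow> 'v set) \<Rightarrow> 'v set \<Rightarrow> 'v \<Rightarrow> 'v arr list" where
  "cyc E \<sigma> s \<alpha> = map (\<lambda>i. ((\<sigma> \<alpha> ^^ i) s, \<alpha>)) [0..<val E \<alpha>]"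

definition bga_rels :: "'v set set \<Rightarrow> ('v \<Rightarrow> 'v set \<Rightarrow> 'v set) \<Rightarrow> ('v,'k::field) kq set" where
  "bga_rels E \<sigma> = (if card E = 1 then
      (let x = (single_edge E, SOME \<alpha>. \<alpha> \<in> single_edge E) in {path_elem (single_edge E, [x, x])})
    else
      {kq_diff (path_elem (s, cyc E \<sigma> s \<alpha>)) (path_elem (s, cyc E \<sigma> s \<beta>)) | s \<alpha> \<beta>.
          s \<in> E \<and> s = {\<alpha>, \<beta>} \<and> \<alpha> \<noteq> \<beta> \<and> val E \<alpha> \<noteq> 1 \<and> val E \<beta> \<noteq> 1}
      \<union> {path_elem (s, cyc E \<sigma> s \<beta> @ [hd (cyc E \<sigma> s \<beta>)]) | s \<alpha> \<beta>.
          s \<in> E \<and> s = {\<alpha>, \<beta>} \<and> \<alpha> \<noteq> \<beta> \<and> val E \<alpha> = 1}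
      \<union> {path_elem (asrc a, [a, b]) | a b.
          a \<in> qarrows E \<and> b \<in> qarrows E \<and> atgt \<sigma> a = asrc b \<and>
          \<not> (\<exists>t \<gamma>. t \<in> E \<and> \<gamma> \<in> t \<and> val E \<gamma> \<noteq> 1 \<and>
                (\<exists>i. Suc i < length (cyc E \<sigma> t \<gamma>) \<and> cyc E \<sigma> t \<gamma> ! i = a
                      \<and> cyc E \<sigma> t \<gamma> ! Suc i = b))})"

inductive_set kq_ideal :: "'v set set \<Rightarrow> ('v \<Rightarrow> 'v set \<Rightarrow> 'v set) \<Rightarrow> ('v,'k::field) kq set \<Rightarrow> ('v,'k) kq set"
  for E \<sigma> R where
  gen: "r \<in> R \<Longrightarrow> r \<in> kq_ideal E \<sigma> R"
| zero: "kq_zero \<in> kq_ideal E \<sigma> R"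
| add: "x \<in> kq_ideal E \<sigma> R \<Longrightarrow> y \<in> kq_ideal E \<sigma> R \<Longrightarrow> kq_add x y \<in> kq_ideal E \<sigma> R"
| mult: "x \<in> kq_ideal E \<sigma> R \<Longrightarrow> f \<in> kq_carrier E \<sigma> \<Longrightarrow> g \<in> kq_carrier E \<sigma> \<Longrightarrow>
          kq_mult E \<sigma> f (kq_mult E \<sigma> x g) \<in> kq_ideal E \<sigma> R"

definition bga_ideal :: "'v set set \<Rightarrow> ('v \<Rightarrow> 'v set \<Rightarrow> 'v set) \<Rightarrow> ('v,'k::field) kq set" where
  "bga_ideal E \<sigma> = kq_ideal E \<sigma> (bga_rels E \<sigma>)"

section \<open>Right modules (carrier based)\<close>

record ('m, 'k, 'a) rmod =
  carr :: "'m set"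
  madd :: "'m \<Rightarrow> 'm \<Rightarrow> 'm"
  mzero :: "'m"
  msmul :: "'k \<Rightarrow> 'm \<Rightarrow> 'm"
  mact :: "'m \<Rightarrow> 'a \<Rightarrow> 'm"

type_synonym ('m,'v,'k) kqmod = "('m, 'k, ('v,'k) kq) rmod"

definition lincomb :: "('m,'v,'k) kqmod \<Rightarrow> 'k list \<Rightarrow> 'm list \<Rightarrow> 'm" where
  "lincomb M cs bs = foldr (\<lambda>cb acc. madd M (msmul M (fst cb) (snd cb)) acc) (zip cs bs) (mzero M)"

definition kq_module :: "'v set set \<Rightarrow> ('v \<Rightarrow> 'v set \<Rightarrow> 'v set) \<Rightarrow> ('m,'v,'k::field) kqmod \<Rightarrow> bool" where
  "kq_module E \<sigma> M \<longleftrightarrow>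
     mzero M \<in> carr M
   \<and> (\<forall>x\<in>carr M. \<forall>y\<in>carr M. madd M x y \<in> carr M)
   \<and> (\<forall>c. \<forall>x\<in>carr M. msmul M c x \<in> carr M)
   \<and> (\<forall>x\<in>carr M. \<forall>f\<in>kq_carrier E \<sigma>. mact M x f \<in> carr M)
   \<and> (\<forall>x\<in>carr M. \<forall>y\<in>carr M. \<forall>z\<in>carr M. madd M (madd M x y) z = madd M x (madd M y z))
   \<and> (\<forall>x\<in>carr M. \<forall>y\<in>carr M. madd M x y = madd M y x)
   \<and> (\<forall>x\<in>carr M. madd M (mzero M) x = x)
   \<and> (\<forall>x\<in>carr M. \<exists>y\<in>carr M. madd M x y = mzero M)
   \<and> (\<forall>c. \<forall>x\<in>carr M. \<forall>y\<in>carr M. msmul M c (madd M x y) = madd M (msmul M c x) (msmul M c y))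
   \<and> (\<forall>c d. \<forall>x\<in>carr M. msmul M (c + d) x = madd M (msmul M c x) (msmul M d x))
   \<and> (\<forall>c d. \<forall>x\<in>carr M. msmul M (c * d) x = msmul M c (msmul M d x))
   \<and> (\<forall>x\<in>carr M. msmul M 1 x = x)
   \<and> (\<forall>x\<in>carr M. \<forall>y\<in>carr M. \<forall>f\<in>kq_carrier E \<sigma>.
        mact M (madd M x y) f = madd M (mact M x f) (mact M y f))
   \<and> (\<forall>x\<in>carr M. \<forall>f\<in>kq_carrier E \<sigma>. \<forall>g\<in>kq_carrier E \<sigma>.
        mact M x (kq_add f g) = madd M (mact M x f) (mact M x g))
   \<and> (\<forall>c. \<forall>x\<in>carr M. \<forall>f\<in>kq_carrier E \<sigma>.
        mact M x (kq_smul c f) = msmul M c (mact M x f)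
      \<and> mact M (msmul M c x) f = msmul M c (mact M x f))
   \<and> (\<forall>x\<in>carr M. \<forall>f\<in>kq_carrier E \<sigma>. \<forall>g\<in>kq_carrier E \<sigma>.
        mact M (mact M x f) g = mact M x (kq_mult E \<sigma> f g))
   \<and> (\<forall>x\<in>carr M. mact M x (kq_one E) = x)
   \<and> (\<exists>bs. set bs \<subseteq> carr M \<and> (\<forall>x\<in>carr M. \<exists>cs. length cs = length bs \<and> x = lincomb M cs bs))"

text \<open>A (finite dimensional) right module over the Brauer graph algebra A = KQ/I:
a right KQ-module annihilated by I.\<close>

definition bga_module :: "'v set set \<Rightarrow> ('v \<Rightarrow> 'v set \<Rightarrow> 'v set) \<Rightarrow> ('m,'v,'k::field) kqmod \<Rightarrow> bool" where
  "bga_module E \<sigma> M \<longleftrightarrow> kq_module E \<sigma> M \<and>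
     (\<forall>x\<in>carr M. \<forall>r\<in>bga_ideal E \<sigma>. mact M x r = mzero M)"

definition submod :: "'v set set \<Rightarrow> ('v \<Rightarrow> 'v set \<Rightarrow> 'v set) \<Rightarrow> ('m,'v,'k::field) kqmod \<Rightarrow> 'm set \<Rightarrow> bool" where
  "submod E \<sigma> M N \<longleftrightarrow> N \<subseteq> carr M \<and> mzero M \<in> N
     \<and> (\<forall>x\<in>N. \<forall>y\<in>N. madd M x y \<in> N)
     \<and> (\<forall>c. \<forall>x\<in>N. msmul M c x \<in> N)
     \<and> (\<forall>x\<in>N. \<forall>f\<in>kq_carrier E \<sigma>. mact M x f \<in> N)"

definition restr :: "('m,'v,'k) kqmod \<Rightarrow> 'm set \<Rightarrow> ('m,'v,'k) kqmod" where
  "restr M N = M\<lparr>carr := N\<rparr>"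

definition simple_mod :: "'v set set \<Rightarrow> ('v \<Rightarrow> 'v set \<Rightarrow> 'v set) \<Rightarrow> ('m,'v,'k::field) kqmod \<Rightarrow> bool" where
  "simple_mod E \<sigma> M \<longleftrightarrow> carr M \<noteq> {mzero M} \<and>
     (\<forall>N. submod E \<sigma> M N \<longrightarrow> N = {mzero M} \<or> N = carr M)"

definition soc :: "'v set set \<Rightarrow> ('v \<Rightarrow> 'v set \<Rightarrow> 'v set) \<Rightarrow> ('m,'v,'k::field) kqmod \<Rightarrow> 'm set" where
  "soc E \<sigma> M = \<Inter>{N. submod E \<sigma> M N \<and>
      (\<forall>S. submod E \<sigma> M S \<and> simple_mod E \<sigma> (restr M S) \<longrightarrow> S \<subseteq> N)}"

definition maximal_submod :: "'v set set \<Rightarrow> ('v \<Rightarrow> 'v set \<Rightarrow> 'v set) \<Rightarrow> ('m,'v,'k::field) kqmod \<Rightarrow> 'm set \<Rightarrow> bool" where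
  "maximal_submod E \<sigma> M N \<longleftrightarrow> submod E \<sigma> M N \<and> N \<noteq> carr M \<and>
     (\<forall>N'. submod E \<sigma> M N' \<and> N \<subseteq> N' \<longrightarrow> N' = N \<or> N' = carr M)"

definition rad :: "'v set set \<Rightarrow> ('v \<Rightarrow> 'v set \<Rightarrow> 'v set) \<Rightarrow> ('m,'v,'k::field) kqmod \<Rightarrow> 'm set" where
  "rad E \<sigma> M = carr M \<inter> \<Inter>{N. maximal_submod E \<sigma> M N}"

definition coset :: "('m,'v,'k) kqmod \<Rightarrow> 'm set \<Rightarrow> 'm \<Rightarrow> 'm set" where
  "coset M N x = {madd M x n | n. n \<in> N}"

definition quot :: "('m,'v,'k) kqmod \<Rightarrow> 'm set \<Rightarrow> ('m set,'v,'k) kqmod" where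
  "quot M N = \<lparr> carr = coset M N ` carr M,
      madd = (\<lambda>C D. {madd M x y | x y. x \<in> C \<and> y \<in> D}),
      mzero = N,
      msmul = (\<lambda>c C. \<Union>x\<in>C. coset M N (msmul M c x)),
      mact = (\<lambda>C f. \<Union>x\<in>C. coset M N (mact M x f)) \<rparr>"

definition top_mod :: "'v set set \<Rightarrow> ('v \<Rightarrow> 'v set \<Rightarrow> 'v set) \<Rightarrow> ('m,'v,'k::field) kqmod \<Rightarrow> ('m set,'v,'k) kqmod" where
  "top_mod E \<sigma> M = quot M (rad E \<sigma> M)"

definition soc_mod :: "'v set set \<Rightarrow> ('v \<Rightarrow> 'v set \<Rightarrow> 'v set) \<Rightarrow> ('m,'v,'k::field) kqmod \<Rightarrow> ('m,'v,'k) kqmod" where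
  "soc_mod E \<sigma> M = restr M (soc E \<sigma> M)"

definition mod_hom :: "'v set set \<Rightarrow> ('v \<Rightarrow> 'v set \<Rightarrow> 'v set) \<Rightarrow> ('m,'v,'k::field) kqmod \<Rightarrow> ('n,'v,'k) kqmod \<Rightarrow> ('m \<Rightarrow> 'n) \<Rightarrow> bool" where
  "mod_hom E \<sigma> M M' h \<longleftrightarrow> h ` carr M \<subseteq> carr M'
     \<and> (\<forall>x\<in>carr M. \<forall>y\<in>carr M. h (madd M x y) = madd M' (h x) (h y))
     \<and> (\<forall>c. \<forall>x\<in>carr M. h (msmul M c x) = msmul M' c (h x))
     \<and> (\<forall>x\<in>carr M. \<forall>f\<in>kq_carrier E \<sigma>. h (mact M x f) = mact M' (h x) f)"

definition mod_iso :: "'v set set \<Rightarrow> ('v \<Rightarrow> 'v set \<Rightarrow> 'v set) \<Rightarrow> ('m,'v,'k::field) kqmod \<Rightarrow> ('n,'v,'k) kqmod \<Rightarrow> bool" where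
  "mod_iso E \<sigma> M M' \<longleftrightarrow> (\<exists>h. mod_hom E \<sigma> M M' h \<and> bij_betw h (carr M) (carr M'))"

definition kq_free_pre :: "'v set set \<Rightarrow> ('v \<Rightarrow> 'v set \<Rightarrow> 'v set) \<Rightarrow> nat \<Rightarrow> (nat \<Rightarrow> ('v,'k::field) kq,'v,'k) kqmod" where
  "kq_free_pre E \<sigma> n = \<lparr> carr = {x. (\<forall>i. x i \<in> kq_carrier E \<sigma>) \<and> (\<forall>i\<ge>n. x i = kq_zero)},
      madd = (\<lambda>x y i. kq_add (x i) (y i)),
      mzero = (\<lambda>i. kq_zero),
      msmul = (\<lambda>c x i. kq_smul c (x i)),
      mact = (\<lambda>x f i. kq_mult E \<sigma> (x i) f) \<rparr>"

text \<open>The free A-module A^n = KQ^n / I^n.\<close>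

definition bga_free :: "'v set set \<Rightarrow> ('v \<Rightarrow> 'v set \<Rightarrow> 'v set) \<Rightarrow> nat \<Rightarrow> ((nat \<Rightarrow> ('v,'k::field) kq) set,'v,'k) kqmod" where
  "bga_free E \<sigma> n = quot (kq_free_pre E \<sigma> n)
      {x \<in> carr (kq_free_pre E \<sigma> n). \<forall>i. x i \<in> bga_ideal E \<sigma>}"

definition projective_mod :: "'v set set \<Rightarrow> ('v \<Rightarrow> 'v set \<Rightarrow> 'v set) \<Rightarrow> ('m,'v,'k::field) kqmod \<Rightarrow> bool" where
  "projective_mod E \<sigma> M \<longleftrightarrow> (\<exists>n X Y.
      submod E \<sigma> (bga_free E \<sigma> n) X \<and> submod E \<sigma> (bga_free E \<sigma> n) Y
    \<and> X \<inter> Y = {mzero (bga_free E \<sigma> n)}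
    \<and> (\<forall>z\<in>carr (bga_free E \<sigma> n). \<exists>x\<in>X. \<exists>y\<in>Y. z = madd (bga_free E \<sigma> n) x y)
    \<and> mod_iso E \<sigma> M (restr (bga_free E \<sigma> n) X))"

definition uniserial :: "'v set set \<Rightarrow> ('v \<Rightarrow> 'v set \<Rightarrow> 'v set) \<Rightarrow> ('m,'v,'k::field) kqmod \<Rightarrow> bool" where
  "uniserial E \<sigma> M \<longleftrightarrow> carr M \<noteq> {mzero M} \<and>
     (\<forall>N N'. submod E \<sigma> M N \<and> submod E \<sigma> M N' \<longrightarrow> N \<subseteq> N' \<or> N' \<subseteq> N)"

end

theory Submission
  imports Defs
begin

fun vp :: "'v set set \<Rightarrow> ('v \<Rightarrow> 'v set \<Rightarrow> 'v set) \<Rightarrow> 'v set \<Rightarrow> 'v arr list \<Rightarrow> bool" where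
  "vp E \<sigma> s [] = (s \<in> E)"
| "vp E \<sigma> s (a#w) = (s \<in> E \<and> a \<in> qarrows E \<and> asrc a = s \<and> vp E \<sigma> (atgt \<sigma> a) w)"

fun pe :: "('v \<Rightarrow> 'v set \<Rightarrow> 'v set) \<Rightarrow> 'v set \<Rightarrow> 'v arr list \<Rightarrow> 'v set" where
  "pe \<sigma> s [] = s"
| "pe \<sigma> s (a#w) = pe \<sigma> (atgt \<sigma> a) w"

lemma path_end_pe: "path_end \<sigma> (s,w) = pe \<sigma> s w"
proof (induction w arbitrary: s)
  case Nil then show ?case by (simp add: path_end_def)
next
  case (Cons a w) then show ?case by (cases w) (auto simp: path_end_def)
qed

lemma vp_inE: "vp E \<sigma> s w \<Longrightarrow> s \<in> E"
  by (cases w) auto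

lemma vp_append: "vp E \<sigma> s (w1 @ w2) \<longleftrightarrow> vp E \<sigma> s w1 \<and> vp E \<sigma> (pe \<sigma> s w1) w2"
  by (induction w1 arbitrary: s) (auto dest: vp_inE)

lemma pe_append: "pe \<sigma> s (w1 @ w2) = pe \<sigma> (pe \<sigma> s w1) w2"
  by (induction w1 arbitrary: s) auto

locale bg =
  fixes V :: "'v set" and E :: "'v set set" and \<sigma> :: "'v \<Rightarrow> 'v set \<Rightarrow> 'v set"
  assumes bg: "brauer_graph_simple_m1 V E \<sigma>"
begin

lemma finV: "finite V" using bg by (simp add: brauer_graph_simple_m1_def)
lemma Ene: "E \<noteq> {}" using bg by (simp add: brauer_graph_simple_m1_def)
lemma Esub: "s \<in> E \<Longrightarrow> s \<subseteq> V" using bg by (simp add: brauer_graph_simple_m1_def)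
lemma Ecard: "s \<in> E \<Longrightarrow> card s = 2" using bg by (simp add: brauer_graph_simple_m1_def)
lemma finE: "finite E"
proof -
  have "E \<subseteq> Pow V" using Esub by auto
  then show ?thesis using finV finite_subset by blast
qed
lemma sig_bij: "\<alpha> \<in> V \<Longrightarrow> bij_betw (\<sigma> \<alpha>) (edges_at E \<alpha>) (edges_at E \<alpha>)"
  using bg by (simp add: brauer_graph_simple_m1_def)
lemma sig_trans: "\<alpha> \<in> V \<Longrightarrow> s \<in> edges_at E \<alpha> \<Longrightarrow> t \<in> edges_at E \<alpha> \<Longrightarrow> \<exists>n. (\<sigma> \<alpha> ^^ n) s = t"
  using bg by (simp add: brauer_graph_simple_m1_def)

lemma sig_in: "s \<in> E \<Longrightarrow> \<alpha> \<in> s \<Longrightarrow> \<sigma> \<alpha> s \<in> E \<and> \<alpha> \<in> \<sigma> \<alpha> s"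
proof -
  assume a: "s \<in> E" "\<alpha> \<in> s"
  then have "\<alpha> \<in> V" using Esub by auto
  then have "\<sigma> \<alpha> s \<in> edges_at E \<alpha>" using sig_bij a bij_betwE by (fastforce simp: edges_at_def)
  then show ?thesis by (simp add: edges_at_def)
qed

lemma sigpow_in: "s \<in> E \<Longrightarrow> \<alpha> \<in> s \<Longrightarrow> (\<sigma> \<alpha> ^^ k) s \<in> E \<and> \<alpha> \<in> (\<sigma> \<alpha> ^^ k) s"
  by (induction k) (auto simp: sig_in)

lemma single_edge: "card E = 1 \<Longrightarrow> E = {single_edge E}"
proof -
  assume "card E = 1"
  then obtain x where "E = {x}" using card_1_singletonE by blast
  then show ?thesis by (simp add: single_edge_def)
qed

lemma single_vertex: "card E = 1 \<Longrightarrow> (SOME \<alpha>. \<alpha> \<in> single_edge E) \<in> single_edge E"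
proof -
  assume "card E = 1"
  then have "single_edge E \<in> E" using single_edge by blast
  then have "card (single_edge E) = 2" using Ecard by blast
  then have "single_edge E \<noteq> {}" by auto
  then show ?thesis by (simp add: some_in_eq)
qed

lemma single_sig: assumes "card E = 1" "\<alpha> \<in> single_edge E"
  shows "\<sigma> \<alpha> (single_edge E) = single_edge E"
proof -
  have "single_edge E \<in> E" using single_edge assms by blast
  then have "\<sigma> \<alpha> (single_edge E) \<in> E" using sig_in assms by blast
  then show ?thesis using single_edge[OF assms(1)] by blast
qed

lemma qarrows_cases:
  "a \<in> qarrows E \<Longrightarrow> fst a \<in> E \<and> snd a \<in> fst a \<and> (card E = 1 \<longrightarrow> E = {fst a} \<and> a = (single_edge E, SOME \<alpha>. \<alpha> \<in> single_edge E))
      \<and> (card E \<noteq> 1 \<longrightarrow> val E (snd a) \<noteq> 1)"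
proof -
  assume a: "a \<in> qarrows E"
  show ?thesis
  proof (cases "card E = 1")
    case True
    then have "a = (single_edge E, SOME \<alpha>. \<alpha> \<in> single_edge E)" using a by (simp add: qarrows_def)
    then show ?thesis using True single_edge[OF True] single_vertex[OF True] by auto
  next
    case False
    then show ?thesis using a by (auto simp: qarrows_def)
  qed
qed

lemma atgt_E: "a \<in> qarrows E \<Longrightarrow> atgt \<sigma> a \<in> E"
  using qarrows_cases sig_in by (auto simp: atgt_def)

lemma asrc_E: "a \<in> qarrows E \<Longrightarrow> asrc a \<in> E"
  using qarrows_cases by (auto simp: asrc_def)

lemma valid_vp: "valid_path E \<sigma> (s,w) \<longleftrightarrow> vp E \<sigma> s w"
proof (induction w arbitrary: s)
  case Nil then show ?case by (simp add: valid_path_def)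
next
  case (Cons a w)
  have ch: "(\<forall>i. Suc i < length (a#w) \<longrightarrow> atgt \<sigma> ((a#w) ! i) = asrc ((a#w) ! Suc i)) \<longleftrightarrow>
     (w \<noteq> [] \<longrightarrow> atgt \<sigma> a = asrc (hd w)) \<and> (\<forall>i. Suc i < length w \<longrightarrow> atgt \<sigma> (w ! i) = asrc (w ! Suc i))"
    (is "?L \<longleftrightarrow> ?R")
  proof
    assume L: ?L
    show ?R
    proof
      show "w \<noteq> [] \<longrightarrow> atgt \<sigma> a = asrc (hd w)" using L[rule_format, of 0] by (cases w) auto
      show "\<forall>i. Suc i < length w \<longrightarrow> atgt \<sigma> (w ! i) = asrc (w ! Suc i)"
        using L by (metis Suc_less_eq length_Cons nth_Cons_Suc)
    qed
  next
    assume R: ?R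
    show ?L
    proof (intro allI impI)
      fix i assume "Suc i < length (a#w)"
      then show "atgt \<sigma> ((a#w) ! i) = asrc ((a#w) ! Suc i)"
        using R by (cases i) (auto simp: hd_conv_nth)
    qed
  qed
  show ?case
    unfolding valid_path_def fst_conv snd_conv ch vp.simps Cons[symmetric, unfolded valid_path_def fst_conv snd_conv]
    using atgt_E[of a] asrc_E[of "hd w"] hd_in_set[of w] by auto
qed


lemma vp_valid: "vp E \<sigma> s w \<Longrightarrow> valid_path E \<sigma> (s,w)" using valid_vp by simp

lemma pelem_carrier: "vp E \<sigma> s w \<Longrightarrow> (path_elem (s,w) :: ('v,'k::field) kq) \<in> kq_carrier E \<sigma>"
proof -
  assume v: "vp E \<sigma> s w"
  have "{p. (path_elem (s,w) :: ('v,'k) kq) p \<noteq> 0} = {(s,w)}" by (auto simp: path_elem_def)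
  then show ?thesis using v valid_vp by (auto simp: kq_carrier_def path_elem_def)
qed

lemma sum_delta_aux: "(\<Sum>k\<in>{..n::nat}. (if k = L \<and> P then 1 else 0)::'a::comm_semiring_1) = (if L \<le> n \<and> P then 1 else 0)"
proof (cases P)
  case True
  have "(\<Sum>k\<in>{..n}. (if k = L then 1 else 0)::'a) = (if L \<le> n then 1 else 0)"
    by (subst sum.delta) auto
  then show ?thesis using True by simp
qed simp

lemma take_eq_len: "k \<le> length xs \<Longrightarrow> take k xs = w \<Longrightarrow> k = length w"
  by auto

lemma kq_mult_pelem:
  assumes v1: "vp E \<sigma> s w1" and v2: "vp E \<sigma> t w2"
  shows "kq_mult E \<sigma> (path_elem (s,w1)) (path_elem (t,w2)) =
     (if pe \<sigma> s w1 = t then path_elem (s, w1@w2) else (kq_zero :: ('v,'k::field) kq))"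
proof (rule ext)
  fix r :: "'v qpath"
  obtain r1 r2 where r: "r = (r1, r2)" by (cases r)
  let ?C = "\<lambda>k. (r1, take k r2) = (s,w1) \<and> (pe \<sigma> r1 (take k r2), drop k r2) = (t,w2)"
  have eq: "(\<Sum>k\<in>{..length r2}. (path_elem (s,w1) :: ('v,'k) kq) (r1, take k r2) *
            path_elem (t,w2) (path_end \<sigma> (r1, take k r2), drop k r2))
       = (\<Sum>k\<in>{..length r2}. if k = length w1 \<and> ?C (length w1) then 1 else 0)"
  proof (rule sum.cong)
    fix k assume k: "k \<in> {..length r2}"
    show "(path_elem (s,w1) :: ('v,'k) kq) (r1, take k r2) *
            path_elem (t,w2) (path_end \<sigma> (r1, take k r2), drop k r2) = (if k = length w1 \<and> ?C (length w1) then 1 else 0)"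
    proof (cases "k = length w1")
      case True then show ?thesis by (auto simp: path_elem_def path_end_pe)
    next
      case False
      have "take k r2 \<noteq> w1" using False k by auto
      then show ?thesis using False by (simp add: path_elem_def)
    qed
  qed simp
  have eq2: "(\<Sum>k\<in>{..length r2}. (if k = length w1 \<and> ?C (length w1) then 1 else 0) :: 'k)
      = (if length w1 \<le> length r2 \<and> ?C (length w1) then 1 else 0)"
    by (rule sum_delta_aux)
  have km: "kq_mult E \<sigma> (path_elem (s,w1) :: ('v,'k) kq) (path_elem (t,w2)) r = (if vp E \<sigma> r1 r2 then (if length w1 \<le> length r2 \<and> ?C (length w1) then 1 else 0) else 0)"
    unfolding r kq_mult_def valid_vp fst_conv snd_conv eq eq2 by simp
  show "kq_mult E \<sigma> (path_elem (s,w1)) (path_elem (t,w2)) r =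
     (if pe \<sigma> s w1 = t then path_elem (s, w1@w2) else (kq_zero :: ('v,'k::field) kq)) r"
  proof (cases "pe \<sigma> s w1 = t")
    case True
    then have vr: "vp E \<sigma> s (w1@w2)" using v1 v2 by (simp add: vp_append)
    show ?thesis
    proof (cases "r = (s, w1@w2)")
      case True
      then show ?thesis using vr \<open>pe \<sigma> s w1 = t\<close> r km
        by (simp add: path_elem_def)
    next
      case False
      have "\<not> (length w1 \<le> length r2 \<and> ?C (length w1))"
      proof
        assume "length w1 \<le> length r2 \<and> ?C (length w1)"
        then have "r2 = w1 @ w2" "r1 = s" by (metis append_take_drop_id prod.inject)+
        then show False using False r by simp
      qed
      then have "kq_mult E \<sigma> (path_elem (s,w1) :: ('v,'k) kq) (path_elem (t,w2)) r = 0"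
        unfolding km by (simp only: if_not_P if_False if_cancel)
      then show ?thesis using \<open>pe \<sigma> s w1 = t\<close> r False
        by (simp add: path_elem_def)
    qed
  next
    case False
    have "\<not> (length w1 \<le> length r2 \<and> ?C (length w1))"
    proof
      assume "length w1 \<le> length r2 \<and> ?C (length w1)"
      then show False using False by auto
    qed
    then have "kq_mult E \<sigma> (path_elem (s,w1) :: ('v,'k) kq) (path_elem (t,w2)) r = 0"
        unfolding km by (simp only: if_not_P if_False if_cancel)
    then show ?thesis using False r by (simp add: kq_zero_def)
  qed
qed

lemma kq_zero_carrier: "(kq_zero :: ('v,'k::field) kq) \<in> kq_carrier E \<sigma>"
  by (simp add: kq_carrier_def kq_zero_def)

lemma kq_add_carrier: "f \<in> kq_carrier E \<sigma> \<Longrightarrow> g \<in> kq_carrier E \<sigma> \<Longrightarrow> kq_add f (g :: ('v,'k::field) kq) \<in> kq_carrier E \<sigma>"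
proof -
  assume f: "f \<in> kq_carrier E \<sigma>" and g: "g \<in> kq_carrier E \<sigma>"
  have "{p. kq_add f g p \<noteq> 0} \<subseteq> {p. f p \<noteq> 0} \<union> {p. g p \<noteq> 0}" by (auto simp: kq_add_def)
  then show ?thesis using f g by (auto simp: kq_carrier_def kq_add_def intro: finite_subset)
qed

lemma kq_smul_carrier: "f \<in> kq_carrier E \<sigma> \<Longrightarrow> kq_smul c (f :: ('v,'k::field) kq) \<in> kq_carrier E \<sigma>"
proof -
  assume f: "f \<in> kq_carrier E \<sigma>"
  have "{p. kq_smul c f p \<noteq> 0} \<subseteq> {p. f p \<noteq> 0}" by (auto simp: kq_smul_def)
  then show ?thesis using f by (auto simp: kq_carrier_def kq_smul_def intro: finite_subset)
qed

lemma kq_mult_carrier: "f \<in> kq_carrier E \<sigma> \<Longrightarrow> g \<in> kq_carrier E \<sigma> \<Longrightarrow> kq_mult E \<sigma> f (g :: ('v,'k::field) kq) \<in> kq_carrier E \<sigma>"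
proof -
  assume f: "f \<in> kq_carrier E \<sigma>" and g: "g \<in> kq_carrier E \<sigma>"
  have "{p. kq_mult E \<sigma> f g p \<noteq> 0} \<subseteq> (\<lambda>(p,q). (fst p, snd p @ snd q)) ` ({p. f p \<noteq> 0} \<times> {p. g p \<noteq> 0})"
  proof
    fix r assume "r \<in> {p. kq_mult E \<sigma> f g p \<noteq> 0}"
    then have v: "valid_path E \<sigma> r" and "(\<Sum>k\<in>{..length (snd r)}. f (fst r, take k (snd r))
          * g (path_end \<sigma> (fst r, take k (snd r)), drop k (snd r))) \<noteq> 0"
      by (auto simp: kq_mult_def split: if_splits)
    then obtain k where "f (fst r, take k (snd r)) * g (path_end \<sigma> (fst r, take k (snd r)), drop k (snd r)) \<noteq> 0"
      using sum.not_neutral_contains_not_neutral by blast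
    then have "f (fst r, take k (snd r)) \<noteq> 0" "g (path_end \<sigma> (fst r, take k (snd r)), drop k (snd r)) \<noteq> 0" by auto
    then show "r \<in> (\<lambda>(p,q). (fst p, snd p @ snd q)) ` ({p. f p \<noteq> 0} \<times> {p. g p \<noteq> 0})"
      by (intro image_eqI[where x="((fst r, take k (snd r)), (path_end \<sigma> (fst r, take k (snd r)), drop k (snd r)))"]) auto
  qed
  moreover have "finite ((\<lambda>(p,q). (fst p, snd p @ snd q)) ` ({p. f p \<noteq> 0} \<times> {p. g p \<noteq> 0}))"
    using f g by (auto simp: kq_carrier_def)
  ultimately have "finite {p. kq_mult E \<sigma> f g p \<noteq> 0}" using finite_subset by blast
  moreover have "\<forall>p. kq_mult E \<sigma> f g p \<noteq> 0 \<longrightarrow> valid_path E \<sigma> p" by (simp add: kq_mult_def)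
  ultimately show ?thesis by (simp add: kq_carrier_def)
qed

lemma kq_induct:
  assumes f: "f \<in> kq_carrier E \<sigma>"
    and z: "Q (kq_zero :: ('v,'k::field) kq)"
    and st: "\<And>g t w c. g \<in> kq_carrier E \<sigma> \<Longrightarrow> Q g \<Longrightarrow> vp E \<sigma> t w \<Longrightarrow> Q (kq_add g (kq_smul c (path_elem (t,w))))"
  shows "Q f"
proof -
  define S0 where "S0 = {p. f p \<noteq> 0}"
  have fin: "finite S0" using f by (simp add: kq_carrier_def S0_def)
  have "\<forall>S. S \<subseteq> S0 \<longrightarrow> Q (\<lambda>q. if q \<in> S then f q else 0) \<and> (\<lambda>q. if q \<in> S then f q else 0) \<in> kq_carrier E \<sigma>"
  proof (intro allI impI)
    fix S assume "S \<subseteq> S0"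
    then have "finite S" using fin finite_subset by blast
    then show "Q (\<lambda>q. if q \<in> S then f q else 0) \<and> (\<lambda>q. if q \<in> S then f q else 0) \<in> kq_carrier E \<sigma>"
      using \<open>S \<subseteq> S0\<close>
    proof (induction S rule: finite_induct)
      case empty
      have "(\<lambda>q. if q \<in> {} then f q else 0) = kq_zero" by (simp add: kq_zero_def)
      then show ?case using z kq_zero_carrier by simp
    next
      case (insert p S)
      obtain t w where p: "p = (t,w)" by (cases p)
      have "f p \<noteq> 0" using insert by (auto simp: S0_def)
      then have vp: "vp E \<sigma> t w" using f p by (auto simp: kq_carrier_def valid_vp)
      have eq: "(\<lambda>q. if q \<in> insert p S then f q else 0) = kq_add (\<lambda>q. if q \<in> S then f q else 0) (kq_smul (f p) (path_elem (t,w)))"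
        using insert(2) p by (auto simp: kq_add_def kq_smul_def path_elem_def)
      have IH: "Q (\<lambda>q. if q \<in> S then f q else 0)" "(\<lambda>q. if q \<in> S then f q else 0) \<in> kq_carrier E \<sigma>"
        using insert by auto
      show ?case unfolding eq using st[OF IH(2) IH(1) vp] IH(2) kq_add_carrier kq_smul_carrier pelem_carrier[OF vp] by blast
    qed
  qed
  moreover have "(\<lambda>q. if q \<in> S0 then f q else 0) = f" by (auto simp: S0_def)
  ultimately show ?thesis by force
qed

lemma kq_one_sum: "kq_one E = (\<lambda>q. \<Sum>t\<in>E. (path_elem (t,[]) :: ('v,'k::field) kq) q)"
proof
  fix q :: "'v qpath"
  obtain q1 q2 where q: "q = (q1,q2)" by (cases q)
  show "kq_one E q = (\<Sum>t\<in>E. (path_elem (t,[]) :: ('v,'k::field) kq) q)"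
  proof (cases "q1 \<in> E \<and> q2 = []")
    case True
    then show ?thesis using finE by (simp add: kq_one_def path_elem_def q sum.delta)
  next
    case False
    then show ?thesis by (auto simp: kq_one_def path_elem_def q intro!: sum.neutral)
  qed
qed

lemma kq_one_carrier: "(kq_one E :: ('v,'k::field) kq) \<in> kq_carrier E \<sigma>"
proof -
  have "{p. (kq_one E :: ('v,'k) kq) p \<noteq> 0} \<subseteq> (\<lambda>t. (t,[])) ` E" by (auto simp: kq_one_def)
  then have "finite {p. (kq_one E :: ('v,'k) kq) p \<noteq> 0}" using finE finite_subset by blast
  then show ?thesis by (auto simp: kq_carrier_def kq_one_def valid_path_def)
qed

end

locale kqm = bg V E \<sigma> for V :: "'v set" and E and \<sigma> +
  fixes M :: "('m,'v,'k::field) kqmod"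
  assumes km: "kq_module E \<sigma> M"
begin

abbreviation "C \<equiv> carr M"
abbreviation "zr \<equiv> mzero M"
abbreviation ad (infixl "\<oplus>" 65) where "x \<oplus> y \<equiv> madd M x y"
abbreviation sm (infixr "\<odot>" 70) where "c \<odot> x \<equiv> msmul M c x"
abbreviation ac (infixl "\<cdot>" 75) where "x \<cdot> f \<equiv> mact M x f"

lemmas km0 = km[unfolded kq_module_def]

lemma z_C0: "zr \<in> C" using km0 by (elim conjE) assumption
lemma z_C: "zr \<in> C" using z_C0 by blast
lemma ad_C0: "\<forall>x\<in>C. \<forall>y\<in>C. x \<oplus> y \<in> C" using km0 by (elim conjE) assumption
lemma ad_C: "x \<in> C \<Longrightarrow> y \<in> C \<Longrightarrow> x \<oplus> y \<in> C" using ad_C0 by blast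
lemma sm_C0: "\<forall>c. \<forall>x\<in>C. c \<odot> x \<in> C" using km0 by (elim conjE) assumption
lemma sm_C: "x \<in> C \<Longrightarrow> c \<odot> x \<in> C" using sm_C0 by blast
lemma ac_C0: "\<forall>x\<in>C. \<forall>f\<in>kq_carrier E \<sigma>. x \<cdot> f \<in> C" using km0 by (elim conjE) assumption
lemma ac_C: "x \<in> C \<Longrightarrow> f \<in> kq_carrier E \<sigma> \<Longrightarrow> x \<cdot> f \<in> C" using ac_C0 by blast
lemma ad_assoc0: "\<forall>x\<in>C. \<forall>y\<in>C. \<forall>w\<in>C. (x \<oplus> y) \<oplus> w = x \<oplus> (y \<oplus> w)" using km0 by (elim conjE) assumption
lemma ad_assoc: "x \<in> C \<Longrightarrow> y \<in> C \<Longrightarrow> w \<in> C \<Longrightarrow> (x \<oplus> y) \<oplus> w = x \<oplus> (y \<oplus> w)" using ad_assoc0 by blast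
lemma ad_comm0: "\<forall>x\<in>C. \<forall>y\<in>C. x \<oplus> y = y \<oplus> x" using km0 by (elim conjE) assumption
lemma ad_comm: "x \<in> C \<Longrightarrow> y \<in> C \<Longrightarrow> x \<oplus> y = y \<oplus> x" using ad_comm0 by blast
lemma z_ad0: "\<forall>x\<in>C. zr \<oplus> x = x" using km0 by (elim conjE) assumption
lemma z_ad: "x \<in> C \<Longrightarrow> zr \<oplus> x = x" using z_ad0 by blast
lemma ad_z: "x \<in> C \<Longrightarrow> x \<oplus> zr = x" using z_ad ad_comm z_C by metis
lemma neg_ex0: "\<forall>x\<in>C. \<exists>y\<in>C. x \<oplus> y = zr" using km0 by (elim conjE) assumption
lemma neg_ex: "x \<in> C \<Longrightarrow> \<exists>y\<in>C. x \<oplus> y = zr" using neg_ex0 by blast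
lemma sm_ad0: "\<forall>c. \<forall>x\<in>C. \<forall>y\<in>C. c \<odot> (x \<oplus> y) = c \<odot> x \<oplus> c \<odot> y" using km0 by (elim conjE) assumption
lemma sm_ad: "x \<in> C \<Longrightarrow> y \<in> C \<Longrightarrow> c \<odot> (x \<oplus> y) = c \<odot> x \<oplus> c \<odot> y" using sm_ad0 by blast
lemma sm_add0: "\<forall>c d. \<forall>x\<in>C. (c + d) \<odot> x = c \<odot> x \<oplus> d \<odot> x" using km0 by (elim conjE) assumption
lemma sm_add: "x \<in> C \<Longrightarrow> (c + d) \<odot> x = c \<odot> x \<oplus> d \<odot> x" using sm_add0 by blast
lemma sm_mult0: "\<forall>c d. \<forall>x\<in>C. (c * d) \<odot> x = c \<odot> (d \<odot> x)" using km0 by (elim conjE) assumption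
lemma sm_mult: "x \<in> C \<Longrightarrow> (c * d) \<odot> x = c \<odot> (d \<odot> x)" using sm_mult0 by blast
lemma sm_one0: "\<forall>x\<in>C. 1 \<odot> x = x" using km0 by (elim conjE) assumption
lemma sm_one: "x \<in> C \<Longrightarrow> 1 \<odot> x = x" using sm_one0 by blast
lemma ac_ad0: "\<forall>x\<in>C. \<forall>y\<in>C. \<forall>f\<in>kq_carrier E \<sigma>. (x \<oplus> y) \<cdot> f = x \<cdot> f \<oplus> y \<cdot> f" using km0 by (elim conjE) assumption
lemma ac_ad: "x \<in> C \<Longrightarrow> y \<in> C \<Longrightarrow> f \<in> kq_carrier E \<sigma> \<Longrightarrow> (x \<oplus> y) \<cdot> f = x \<cdot> f \<oplus> y \<cdot> f" using ac_ad0 by blast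
lemma ac_add0: "\<forall>x\<in>C. \<forall>f\<in>kq_carrier E \<sigma>. \<forall>g\<in>kq_carrier E \<sigma>. x \<cdot> kq_add f g = x \<cdot> f \<oplus> x \<cdot> g" using km0 by (elim conjE) assumption
lemma ac_add: "x \<in> C \<Longrightarrow> f \<in> kq_carrier E \<sigma> \<Longrightarrow> g \<in> kq_carrier E \<sigma> \<Longrightarrow> x \<cdot> kq_add f g = x \<cdot> f \<oplus> x \<cdot> g" using ac_add0 by blast
lemma acsm0: "\<forall>c. \<forall>x\<in>C. \<forall>f\<in>kq_carrier E \<sigma>. x \<cdot> kq_smul c f = c \<odot> (x \<cdot> f) \<and> (c \<odot> x) \<cdot> f = c \<odot> (x \<cdot> f)" using km0 by (elim conjE) assumption
lemma ac_smul0: "\<forall>c. \<forall>x\<in>C. \<forall>f\<in>kq_carrier E \<sigma>. x \<cdot> kq_smul c f = c \<odot> (x \<cdot> f)" using acsm0 by blast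
lemma ac_smul: "x \<in> C \<Longrightarrow> f \<in> kq_carrier E \<sigma> \<Longrightarrow> x \<cdot> kq_smul c f = c \<odot> (x \<cdot> f)" using ac_smul0 by blast
lemma sm_ac0: "\<forall>c. \<forall>x\<in>C. \<forall>f\<in>kq_carrier E \<sigma>. (c \<odot> x) \<cdot> f = c \<odot> (x \<cdot> f)" using acsm0 by blast
lemma sm_ac: "x \<in> C \<Longrightarrow> f \<in> kq_carrier E \<sigma> \<Longrightarrow> (c \<odot> x) \<cdot> f = c \<odot> (x \<cdot> f)" using sm_ac0 by blast
lemma ac_ac0: "\<forall>x\<in>C. \<forall>f\<in>kq_carrier E \<sigma>. \<forall>g\<in>kq_carrier E \<sigma>. (x \<cdot> f) \<cdot> g = x \<cdot> kq_mult E \<sigma> f g" using km0 by (elim conjE) assumption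
lemma ac_ac: "x \<in> C \<Longrightarrow> f \<in> kq_carrier E \<sigma> \<Longrightarrow> g \<in> kq_carrier E \<sigma> \<Longrightarrow> (x \<cdot> f) \<cdot> g = x \<cdot> kq_mult E \<sigma> f g" using ac_ac0 by blast
lemma ac_one0: "\<forall>x\<in>C. x \<cdot> kq_one E = x" using km0 by (elim conjE) assumption
lemma ac_one: "x \<in> C \<Longrightarrow> x \<cdot> kq_one E = x" using ac_one0 by blast
lemma basis: "\<exists>bs. set bs \<subseteq> C \<and> (\<forall>x\<in>C. \<exists>cs. length cs = length bs \<and> x = lincomb M cs bs)"
  using km by (auto simp: kq_module_def)

lemma ad_cancel: "x \<in> C \<Longrightarrow> y \<in> C \<Longrightarrow> w \<in> C \<Longrightarrow> x \<oplus> y = x \<oplus> w \<Longrightarrow> y = w"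
proof -
  assume a: "x \<in> C" "y \<in> C" "w \<in> C" "x \<oplus> y = x \<oplus> w"
  obtain n where n: "n \<in> C" "x \<oplus> n = zr" using neg_ex a by blast
  have "y = (n \<oplus> x) \<oplus> y" using n a z_ad ad_comm by metis
  also have "\<dots> = n \<oplus> (x \<oplus> w)" using a n ad_assoc by metis
  also have "\<dots> = w" using n a z_ad ad_comm ad_assoc by metis
  finally show ?thesis .
qed

lemma self_ad_zero: "x \<in> C \<Longrightarrow> x \<oplus> x = x \<Longrightarrow> x = zr"
  using ad_cancel ad_z z_C by metis

lemma sm_zero_left: "x \<in> C \<Longrightarrow> 0 \<odot> x = zr"
  using self_ad_zero sm_add[of x 0 0] sm_C by simp

lemma sm_zero_right: "c \<odot> zr = zr"
  using self_ad_zero sm_ad[of zr zr c] sm_C z_C ad_z by metis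

lemma ac_kq_zero: "x \<in> C \<Longrightarrow> x \<cdot> kq_zero = zr"
proof -
  assume x: "x \<in> C"
  have "kq_add kq_zero kq_zero = (kq_zero :: ('v,'k) kq)" by (simp add: kq_add_def kq_zero_def)
  then have "x \<cdot> kq_zero \<oplus> x \<cdot> kq_zero = x \<cdot> kq_zero" using ac_add[OF x kq_zero_carrier kq_zero_carrier] by simp
  then show ?thesis using self_ad_zero ac_C x kq_zero_carrier by blast
qed

lemma ac_zero_left: "f \<in> kq_carrier E \<sigma> \<Longrightarrow> zr \<cdot> f = zr"
  using self_ad_zero ac_ad[of zr zr f] ac_C z_C ad_z by metis

lemma sm_neg: "x \<in> C \<Longrightarrow> x \<oplus> (-1) \<odot> x = zr"
proof -
  assume x: "x \<in> C"
  have "x \<oplus> (-1) \<odot> x = 1 \<odot> x \<oplus> (-1) \<odot> x" using sm_one x by simp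
  also have "\<dots> = (1 + -1) \<odot> x" using sm_add[OF x, of 1 "-1"] by simp
  also have "\<dots> = 0 \<odot> x" by simp
  finally show ?thesis using sm_zero_left x by simp
qed

lemma sm_inj: "x \<in> C \<Longrightarrow> c \<noteq> 0 \<Longrightarrow> c \<odot> x = zr \<Longrightarrow> x = zr"
proof -
  assume a: "x \<in> C" "c \<noteq> 0" "c \<odot> x = zr"
  have "x = (inverse c * c) \<odot> x" using a sm_one by simp
  also have "\<dots> = inverse c \<odot> (c \<odot> x)" using sm_mult[OF a(1)] by blast
  finally show ?thesis using a sm_zero_right by simp
qed

lemma sm_cancel: "x \<in> C \<Longrightarrow> x \<noteq> zr \<Longrightarrow> c \<odot> x = d \<odot> x \<Longrightarrow> c = d"
proof -
  assume a: "x \<in> C" "x \<noteq> zr" "c \<odot> x = d \<odot> x"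
  have "(c - d) \<odot> x = c \<odot> x \<oplus> (- d) \<odot> x" using sm_add[OF a(1), of c "-d"] by simp
  also have "\<dots> = d \<odot> x \<oplus> (- d) \<odot> x" using a by simp
  also have "\<dots> = (d + - d) \<odot> x" using sm_add[OF a(1), of d "-d"] by simp
  also have "\<dots> = zr" using sm_zero_left a by simp
  finally have "(c - d) \<odot> x = zr" .
  then have "c - d = 0" using sm_inj a by blast
  then show ?thesis by simp
qed

lemma sm_cancel2: "x \<in> C \<Longrightarrow> c \<noteq> 0 \<Longrightarrow> c \<odot> x = c \<odot> y \<Longrightarrow> y \<in> C \<Longrightarrow> x = y"
proof -
  assume a: "x \<in> C" "c \<noteq> 0" "c \<odot> x = c \<odot> y" "y \<in> C"
  have "x = (inverse c * c) \<odot> x" using a sm_one by simp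
  also have "\<dots> = inverse c \<odot> (c \<odot> y)" by (metis sm_mult a(1) a(3))
  also have "\<dots> = (inverse c * c) \<odot> y" by (metis sm_mult a(4))
  finally show ?thesis using a sm_one by simp
qed

abbreviation "sub N \<equiv> submod E \<sigma> M N"

lemma sub_props: "sub N \<Longrightarrow> N \<subseteq> C \<and> zr \<in> N \<and> (\<forall>x\<in>N. \<forall>y\<in>N. x \<oplus> y \<in> N) \<and> (\<forall>c. \<forall>x\<in>N. c \<odot> x \<in> N)
   \<and> (\<forall>x\<in>N. \<forall>f\<in>kq_carrier E \<sigma>. x \<cdot> f \<in> N)"
  by (simp add: submod_def)

lemma sub_C: "sub C"
  using z_C ad_C sm_C ac_C by (simp add: submod_def)

definition gen :: "'m \<Rightarrow> 'm set" where "gen u = {u \<cdot> f | f. f \<in> kq_carrier E \<sigma>}"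

lemma gen_sub: "u \<in> C \<Longrightarrow> sub (gen u)"
proof -
  assume u: "u \<in> C"
  show ?thesis unfolding submod_def gen_def
  proof (intro conjI ballI allI)
    show "{u \<cdot> f |f. f \<in> kq_carrier E \<sigma>} \<subseteq> C" using u ac_C by auto
    show "zr \<in> {u \<cdot> f |f. f \<in> kq_carrier E \<sigma>}" using ac_kq_zero[OF u] kq_zero_carrier by (metis (mono_tags, lifting) mem_Collect_eq)
    fix x y assume "x \<in> {u \<cdot> f |f. f \<in> kq_carrier E \<sigma>}" "y \<in> {u \<cdot> f |f. f \<in> kq_carrier E \<sigma>}"
    then obtain f g where "x = u \<cdot> f" "y = u \<cdot> g" "f \<in> kq_carrier E \<sigma>" "g \<in> kq_carrier E \<sigma>" by auto
    then show "x \<oplus> y \<in> {u \<cdot> f |f. f \<in> kq_carrier E \<sigma>}" using ac_add[OF u] kq_add_carrier by (metis (mono_tags, lifting) mem_Collect_eq)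
  next
    fix c x assume "x \<in> {u \<cdot> f |f. f \<in> kq_carrier E \<sigma>}"
    then obtain f where "x = u \<cdot> f" "f \<in> kq_carrier E \<sigma>" by auto
    then show "c \<odot> x \<in> {u \<cdot> f |f. f \<in> kq_carrier E \<sigma>}" using ac_smul[OF u] kq_smul_carrier by (metis (mono_tags, lifting) mem_Collect_eq)
  next
    fix x and g :: "('v,'k) kq" assume "x \<in> {u \<cdot> f |f. f \<in> kq_carrier E \<sigma>}" "g \<in> kq_carrier E \<sigma>"
    then obtain f where "x = u \<cdot> f" "f \<in> kq_carrier E \<sigma>" by auto
    then show "x \<cdot> g \<in> {u \<cdot> f |f. f \<in> kq_carrier E \<sigma>}" using ac_ac[OF u] kq_mult_carrier \<open>g \<in> kq_carrier E \<sigma>\<close> by (metis (mono_tags, lifting) mem_Collect_eq)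
  qed
qed

lemma gen_mem: "u \<in> C \<Longrightarrow> u \<in> gen u"
  using ac_one kq_one_carrier by (force simp: gen_def)

lemma gen_le: "sub N \<Longrightarrow> u \<in> N \<Longrightarrow> gen u \<subseteq> N"
  by (auto simp: gen_def submod_def)

end


lemma funpow_shift: "i \<le> j \<Longrightarrow> (f ^^ (j - i)) ((f ^^ i) x) = (f ^^ j) x"
  by (metis funpow_add le_add_diff_inverse2 o_apply)

lemma funpow_in: "bij_betw f X X \<Longrightarrow> x \<in> X \<Longrightarrow> (f ^^ n) x \<in> X"
  using bij_betw_funpow bij_betwE by blast

lemma cyc_period_big:
  assumes b: "bij_betw f X X" and fin: "finite X" and tr: "\<forall>x\<in>X. \<forall>y\<in>X. \<exists>n. (f^^n) x = y"
    and y: "y \<in> X" and d: "0 < d" "(f ^^ d) y = y"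
  shows "card X \<le> d"
proof -
  have "X \<subseteq> (\<lambda>r. (f ^^ r) y) ` {..<d}"
  proof
    fix w assume "w \<in> X"
    then obtain m where "(f ^^ m) y = w" using tr y by blast
    moreover have "(f ^^ (m mod d)) y = (f ^^ m) y" by (rule funpow_mod_eq) (rule d(2))
    ultimately have "(f ^^ (m mod d)) y = w" by simp
    then show "w \<in> (\<lambda>r. (f ^^ r) y) ` {..<d}" using d by force
  qed
  then have "card X \<le> card ((\<lambda>r. (f ^^ r) y) ` {..<d})" by (simp add: card_mono)
  also have "\<dots> \<le> d" using card_image_le[of "{..<d}"] by simp
  finally show ?thesis .
qed

lemma cyc_inj:
  assumes b: "bij_betw f X X" and fin: "finite X" and tr: "\<forall>x\<in>X. \<forall>y\<in>X. \<exists>n. (f^^n) x = y"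
    and x: "x \<in> X" and ij: "i < j" "j < card X"
  shows "(f ^^ i) x \<noteq> (f ^^ j) x"
proof
  assume eq: "(f ^^ i) x = (f ^^ j) x"
  define y where "y = (f ^^ i) x"
  have y: "y \<in> X" unfolding y_def by (rule funpow_in[OF b x])
  have "(f ^^ (j - i)) y = (f ^^ j) x" unfolding y_def by (rule funpow_shift) (use ij in simp)
  then have "(f ^^ (j - i)) y = y" using eq y_def by simp
  moreover have "0 < j - i" using ij by simp
  ultimately have "card X \<le> j - i" using cyc_period_big[OF b fin tr y] by blast
  then show False using ij by simp
qed

lemma cyc_full:
  assumes b: "bij_betw f X X" and fin: "finite X" and tr: "\<forall>x\<in>X. \<forall>y\<in>X. \<exists>n. (f^^n) x = y"
    and x: "x \<in> X"
  shows "(f ^^ card X) x = x"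
proof -
  have "\<not> inj_on (\<lambda>i. (f ^^ i) x) {..card X}"
  proof
    assume "inj_on (\<lambda>i. (f ^^ i) x) {..card X}"
    then have c: "card ((\<lambda>i. (f ^^ i) x) ` {..card X}) = Suc (card X)" by (simp add: card_image)
    have "(\<lambda>i. (f ^^ i) x) ` {..card X} \<subseteq> X" using funpow_in[OF b x] by blast
    from card_mono[OF fin this] c show False by simp
  qed
  then obtain i0 j0 where ij0: "i0 \<le> card X" "j0 \<le> card X" "i0 \<noteq> j0" "(f ^^ i0) x = (f ^^ j0) x"
    unfolding inj_on_def by auto
  have "\<exists>i j. i < j \<and> j \<le> card X \<and> (f ^^ i) x = (f ^^ j) x"
  proof (cases "i0 < j0")
    case True then show ?thesis using ij0 by blast
  next
    case False then have "j0 < i0" using ij0(3) by simp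
    then show ?thesis using ij0 by metis
  qed
  then obtain i j where ij: "i < j" "j \<le> card X" "(f ^^ i) x = (f ^^ j) x" by blast
  have jc: "j = card X"
  proof (rule ccontr)
    assume "j \<noteq> card X" then have "j < card X" using ij by simp
    then show False using cyc_inj[OF b fin tr x ij(1)] ij(3) by blast
  qed
  have "(f ^^ i) ((f ^^ (card X - i)) x) = (f ^^ (i + (card X - i))) x" by (simp add: funpow_add)
  also have "i + (card X - i) = card X" using ij jc by simp
  finally have fi: "(f ^^ i) ((f ^^ (card X - i)) x) = (f ^^ i) x" using ij jc by simp
  have "bij_betw (f ^^ i) X X" using bij_betw_funpow b by blast
  then have "inj_on (f ^^ i) X" by (simp add: bij_betw_def)
  then have fx: "(f ^^ (card X - i)) x = x" using fi funpow_in[OF b x] x by (meson inj_onD)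
  show ?thesis
  proof (cases "i = 0")
    case True then show ?thesis using fx by simp
  next
    case False
    then have "card X \<le> card X - i" using cyc_period_big[OF b fin tr x _ fx] ij jc by simp
    then show ?thesis using False ij jc by simp
  qed
qed


context bg begin

definition arrs :: "'v set \<Rightarrow> 'v \<Rightarrow> nat \<Rightarrow> 'v arr list" where
  "arrs s \<alpha> k = map (\<lambda>i. ((\<sigma> \<alpha> ^^ i) s, \<alpha>)) [0..<k]"

lemma edges_fin: "finite (edges_at E \<alpha>)"
  using finE by (simp add: edges_at_def)

lemma cyc_injE: "s \<in> E \<Longrightarrow> \<alpha> \<in> s \<Longrightarrow> i < j \<Longrightarrow> j < val E \<alpha> \<Longrightarrow> (\<sigma> \<alpha> ^^ i) s \<noteq> (\<sigma> \<alpha> ^^ j) s"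
proof -
  assume a: "s \<in> E" "\<alpha> \<in> s" "i < j" "j < val E \<alpha>"
  then have V: "\<alpha> \<in> V" using Esub by auto
  show ?thesis
    by (rule cyc_inj[OF sig_bij[OF V] edges_fin]) (use sig_trans[OF V] a in \<open>auto simp: edges_at_def val_def\<close>)
qed

lemma cyc_fullE: "s \<in> E \<Longrightarrow> \<alpha> \<in> s \<Longrightarrow> (\<sigma> \<alpha> ^^ val E \<alpha>) s = s"
proof -
  assume a: "s \<in> E" "\<alpha> \<in> s"
  then have V: "\<alpha> \<in> V" using Esub by auto
  show ?thesis unfolding val_def
    by (rule cyc_full[OF sig_bij[OF V] edges_fin]) (use sig_trans[OF V] a in \<open>auto simp: edges_at_def\<close>)
qed

lemma val_pos: "s \<in> E \<Longrightarrow> \<alpha> \<in> s \<Longrightarrow> 1 \<le> val E \<alpha>"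
proof -
  assume a: "s \<in> E" "\<alpha> \<in> s"
  then have "s \<in> edges_at E \<alpha>" by (simp add: edges_at_def)
  then have "edges_at E \<alpha> \<noteq> {}" by blast
  then show ?thesis using edges_fin by (simp add: val_def Suc_le_eq card_gt_0_iff)
qed

lemma edge_eq: "s \<in> E \<Longrightarrow> \<alpha> \<in> s \<Longrightarrow> \<beta> \<in> s \<Longrightarrow> \<alpha> \<noteq> \<beta> \<Longrightarrow> s = {\<alpha>, \<beta>}"
proof -
  assume a: "s \<in> E" "\<alpha> \<in> s" "\<beta> \<in> s" "\<alpha> \<noteq> \<beta>"
  have "card s = 2" using Ecard a by blast
  then have "finite s" by (simp add: card_ge_0_finite)
  moreover have "{\<alpha>, \<beta>} \<subseteq> s" using a by blast
  moreover have "card {\<alpha>, \<beta>} = card s" using a \<open>card s = 2\<close> by simp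
  ultimately show ?thesis using card_subset_eq[of s "{\<alpha>, \<beta>}"] by simp
qed

lemma arrow_pow: "(s,\<alpha>) \<in> qarrows E \<Longrightarrow> ((\<sigma> \<alpha> ^^ i) s, \<alpha>) \<in> qarrows E"
proof -
  assume q: "(s,\<alpha>) \<in> qarrows E"
  show ?thesis
  proof (cases "card E = 1")
    case True
    then have "s = single_edge E" "\<alpha> = (SOME \<alpha>. \<alpha> \<in> single_edge E)" using q by (auto simp: qarrows_def)
    then have "\<sigma> \<alpha> s = s" using single_sig[OF True] single_vertex[OF True] by simp
    then have "(\<sigma> \<alpha> ^^ i) s = s" by (induction i) auto
    then show ?thesis using q by simp
  next
    case False
    then have "s \<in> E" "\<alpha> \<in> s" "val E \<alpha> \<noteq> 1" using q by (auto simp: qarrows_def)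
    then show ?thesis using sigpow_in False by (auto simp: qarrows_def)
  qed
qed

lemma arrs_Suc: "arrs s \<alpha> (Suc k) = arrs s \<alpha> k @ [((\<sigma> \<alpha> ^^ k) s, \<alpha>)]"
  by (simp add: arrs_def)

lemma vp_arrs: "(s,\<alpha>) \<in> qarrows E \<Longrightarrow> vp E \<sigma> s (arrs s \<alpha> k) \<and> pe \<sigma> s (arrs s \<alpha> k) = (\<sigma> \<alpha> ^^ k) s"
proof (induction k)
  case 0 then show ?case using asrc_E[of "(s,\<alpha>)"] by (simp add: arrs_def asrc_def)
next
  case (Suc k)
  have q: "((\<sigma> \<alpha> ^^ k) s, \<alpha>) \<in> qarrows E" using arrow_pow Suc by blast
  then have "vp E \<sigma> ((\<sigma> \<alpha> ^^ k) s) [((\<sigma> \<alpha> ^^ k) s, \<alpha>)]"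
    using asrc_E[OF q] atgt_E[OF q] by (simp add: asrc_def)
  then show ?case using Suc by (simp add: arrs_Suc vp_append pe_append atgt_def)
qed

lemma arrs_add: "arrs s \<alpha> k @ arrs ((\<sigma> \<alpha> ^^ k) s) \<alpha> m = arrs s \<alpha> (k + m)"
proof (induction m)
  case 0 then show ?case by (simp add: arrs_def)
next
  case (Suc m)
  have "(\<sigma> \<alpha> ^^ m) ((\<sigma> \<alpha> ^^ k) s) = (\<sigma> \<alpha> ^^ (k + m)) s"
    by (metis funpow_add add.commute o_apply)
  then show ?case using Suc by (simp add: arrs_Suc)
qed

lemma arrs_len: "length (arrs s \<alpha> k) = k" by (simp add: arrs_def)

lemma cyc_arrs: "cyc E \<sigma> s \<alpha> = arrs s \<alpha> (val E \<alpha>)" by (simp add: cyc_def arrs_def)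

lemma rels_ne1: "card E \<noteq> 1 \<Longrightarrow> bga_rels E \<sigma> =
      {kq_diff (path_elem (s, cyc E \<sigma> s \<alpha>)) (path_elem (s, cyc E \<sigma> s \<beta>)) | s \<alpha> \<beta>.
          s \<in> E \<and> s = {\<alpha>, \<beta>} \<and> \<alpha> \<noteq> \<beta> \<and> val E \<alpha> \<noteq> 1 \<and> val E \<beta> \<noteq> 1}
      \<union> {path_elem (s, cyc E \<sigma> s \<beta> @ [hd (cyc E \<sigma> s \<beta>)]) | s \<alpha> \<beta>.
          s \<in> E \<and> s = {\<alpha>, \<beta>} \<and> \<alpha> \<noteq> \<beta> \<and> val E \<alpha> = 1}
      \<union> {path_elem (asrc a, [a, b]) | a b.
          a \<in> qarrows E \<and> b \<in> qarrows E \<and> atgt \<sigma> a = asrc b \<and>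
          \<not> (\<exists>t \<gamma>. t \<in> E \<and> \<gamma> \<in> t \<and> val E \<gamma> \<noteq> 1 \<and>
                (\<exists>i. Suc i < length (cyc E \<sigma> t \<gamma>) \<and> cyc E \<sigma> t \<gamma> ! i = a
                      \<and> cyc E \<sigma> t \<gamma> ! Suc i = b))}"
  unfolding bga_rels_def by (simp only: if_False)

lemma rel_bad:
  assumes c: "card E \<noteq> 1" and a: "a \<in> qarrows E" and b: "b \<in> qarrows E" and ab: "atgt \<sigma> a = asrc b"
    and nb: "b \<noteq> (\<sigma> (snd a) (fst a), snd a)"
  shows "path_elem (asrc a, [a,b]) \<in> bga_rels E \<sigma>"
proof -
  have "\<not> (\<exists>t \<gamma>. t \<in> E \<and> \<gamma> \<in> t \<and> val E \<gamma> \<noteq> 1 \<and>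
                (\<exists>i. Suc i < length (cyc E \<sigma> t \<gamma>) \<and> cyc E \<sigma> t \<gamma> ! i = a
                      \<and> cyc E \<sigma> t \<gamma> ! Suc i = b))"
  proof
    assume "\<exists>t \<gamma>. t \<in> E \<and> \<gamma> \<in> t \<and> val E \<gamma> \<noteq> 1 \<and>
                (\<exists>i. Suc i < length (cyc E \<sigma> t \<gamma>) \<and> cyc E \<sigma> t \<gamma> ! i = a
                      \<and> cyc E \<sigma> t \<gamma> ! Suc i = b)"
    then obtain t \<gamma> i where "Suc i < length (cyc E \<sigma> t \<gamma>)" "cyc E \<sigma> t \<gamma> ! i = a" "cyc E \<sigma> t \<gamma> ! Suc i = b"
      by blast
    then have "a = ((\<sigma> \<gamma> ^^ i) t, \<gamma>)" "b = ((\<sigma> \<gamma> ^^ Suc i) t, \<gamma>)"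
      by (auto simp: cyc_def simp del: funpow.simps)
    then show False using nb by simp
  qed
  then show ?thesis unfolding rels_ne1[OF c] by (intro UnI2) (use a b ab in blast)
qed

lemma rel_single: "card E = 1 \<Longrightarrow> x = (single_edge E, SOME \<alpha>. \<alpha> \<in> single_edge E) \<Longrightarrow>
   path_elem (single_edge E, [x,x]) \<in> bga_rels E \<sigma>"
  by (simp add: bga_rels_def Let_def)

lemma rel_type1: "card E \<noteq> 1 \<Longrightarrow> s \<in> E \<Longrightarrow> \<alpha> \<in> s \<Longrightarrow> \<beta> \<in> s \<Longrightarrow> \<alpha> \<noteq> \<beta> \<Longrightarrow> val E \<alpha> \<noteq> 1 \<Longrightarrow> val E \<beta> \<noteq> 1 \<Longrightarrow>
   kq_diff (path_elem (s, cyc E \<sigma> s \<alpha>)) (path_elem (s, cyc E \<sigma> s \<beta>)) \<in> bga_rels E \<sigma>"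
proof -
  assume a: "card E \<noteq> 1" "s \<in> E" "\<alpha> \<in> s" "\<beta> \<in> s" "\<alpha> \<noteq> \<beta>" "val E \<alpha> \<noteq> 1" "val E \<beta> \<noteq> 1"
  then have "s = {\<alpha>, \<beta>}" using edge_eq by blast
  then show ?thesis unfolding rels_ne1[OF a(1)] by (intro UnI1) (use a in blast)
qed

lemma rel_type2: "card E \<noteq> 1 \<Longrightarrow> s \<in> E \<Longrightarrow> \<alpha> \<in> s \<Longrightarrow> \<beta> \<in> s \<Longrightarrow> \<alpha> \<noteq> \<beta> \<Longrightarrow> val E \<beta> = 1 \<Longrightarrow>
   path_elem (s, cyc E \<sigma> s \<alpha> @ [hd (cyc E \<sigma> s \<alpha>)]) \<in> bga_rels E \<sigma>"
proof -
  assume a: "card E \<noteq> 1" "s \<in> E" "\<alpha> \<in> s" "\<beta> \<in> s" "\<alpha> \<noteq> \<beta>" "val E \<beta> = 1"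
  then have "s = {\<beta>, \<alpha>}" using edge_eq by blast
  then have "path_elem (s, cyc E \<sigma> s \<alpha> @ [hd (cyc E \<sigma> s \<alpha>)]) \<in> {path_elem (s, cyc E \<sigma> s \<beta>' @ [hd (cyc E \<sigma> s \<beta>')]) | s \<alpha>' \<beta>'.
          s \<in> E \<and> s = {\<alpha>', \<beta>'} \<and> \<alpha>' \<noteq> \<beta>' \<and> val E \<alpha>' = 1}" using a by blast
  then show ?thesis unfolding rels_ne1[OF a(1)] by (intro UnI1 UnI2)
qed

end



context bg begin

lemma qa_mem: "(s,\<alpha>) \<in> qarrows E \<Longrightarrow> s \<in> E \<and> \<alpha> \<in> s"
  using qarrows_cases by fastforce

lemma val2: "card E \<noteq> 1 \<Longrightarrow> (s,\<delta>) \<in> qarrows E \<Longrightarrow> 2 \<le> val E \<delta>"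
proof -
  assume c: "card E \<noteq> 1" and q: "(s,\<delta>) \<in> qarrows E"
  then have "s \<in> E" "\<delta> \<in> s" "val E \<delta> \<noteq> 1" by (auto simp: qarrows_def)
  then show ?thesis using val_pos by fastforce
qed

lemma sig_ne: "card E \<noteq> 1 \<Longrightarrow> (s,\<delta>) \<in> qarrows E \<Longrightarrow> \<sigma> \<delta> s \<noteq> s"
proof -
  assume c: "card E \<noteq> 1" and q: "(s,\<delta>) \<in> qarrows E"
  then have "s \<in> E" "\<delta> \<in> s" by (auto simp: qarrows_def)
  moreover have "1 < val E \<delta>" using val2[OF c q] by simp
  ultimately have "(\<sigma> \<delta> ^^ 0) s \<noteq> (\<sigma> \<delta> ^^ 1) s" using cyc_injE[of s \<delta> 0 1] by simp
  then show ?thesis by simp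
qed

lemma two_dirs: "card E \<noteq> 1 \<Longrightarrow> (s,\<gamma>) \<in> qarrows E \<Longrightarrow> (s,\<delta>) \<in> qarrows E \<Longrightarrow> \<gamma> \<noteq> \<delta> \<Longrightarrow>
  (\<sigma> \<gamma> ^^ k) s \<noteq> \<sigma> \<delta> s"
proof
  assume c: "card E \<noteq> 1" and q: "(s,\<gamma>) \<in> qarrows E" "(s,\<delta>) \<in> qarrows E" and gd: "\<gamma> \<noteq> \<delta>"
    and eq: "(\<sigma> \<gamma> ^^ k) s = \<sigma> \<delta> s"
  have s: "s \<in> E" "\<gamma> \<in> s" "\<delta> \<in> s" using q qa_mem by auto
  have r: "(\<sigma> \<gamma> ^^ k) s \<in> E" "\<gamma> \<in> (\<sigma> \<gamma> ^^ k) s" using sigpow_in s by blast+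
  have "\<delta> \<in> \<sigma> \<delta> s" using sig_in s by blast
  then have "(\<sigma> \<gamma> ^^ k) s = {\<gamma>, \<delta>}" using edge_eq[OF r(1) r(2)] eq gd by simp
  moreover have "s = {\<gamma>, \<delta>}" using edge_eq s gd by blast
  ultimately have "\<sigma> \<delta> s = s" using eq by simp
  then show False using sig_ne[OF c q(2)] by simp
qed

end

context kqm begin

lemma diff_zero_eq: "a \<in> C \<Longrightarrow> b \<in> C \<Longrightarrow> a \<oplus> (-1) \<odot> b = zr \<Longrightarrow> a = b"
proof -
  assume a: "a \<in> C" "b \<in> C" "a \<oplus> (-1) \<odot> b = zr"
  have nb: "(-1) \<odot> b \<oplus> b = zr" using sm_neg[OF a(2)] ad_comm sm_C a(2) by metis
  have "a = a \<oplus> ((-1) \<odot> b \<oplus> b)" using nb ad_z a by simp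
  also have "\<dots> = (a \<oplus> (-1) \<odot> b) \<oplus> b" using ad_assoc a sm_C by metis
  also have "\<dots> = b" using a z_ad by simp
  finally show ?thesis .
qed

lemma act_app: "x \<in> C \<Longrightarrow> vp E \<sigma> s (w1 @ w2) \<Longrightarrow>
   x \<cdot> path_elem (s, w1 @ w2) = (x \<cdot> path_elem (s, w1)) \<cdot> path_elem (pe \<sigma> s w1, w2)"
proof -
  assume x: "x \<in> C" and v: "vp E \<sigma> s (w1 @ w2)"
  then have v1: "vp E \<sigma> s w1" and v2: "vp E \<sigma> (pe \<sigma> s w1) w2" by (auto simp: vp_append)
  have "(x \<cdot> path_elem (s, w1)) \<cdot> path_elem (pe \<sigma> s w1, w2) = x \<cdot> kq_mult E \<sigma> (path_elem (s, w1)) (path_elem (pe \<sigma> s w1, w2))"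
    using ac_ac[OF x pelem_carrier[OF v1] pelem_carrier[OF v2]] .
  also have "kq_mult E \<sigma> (path_elem (s, w1)) (path_elem (pe \<sigma> s w1, w2)) = (path_elem (s, w1 @ w2) :: ('v,'k) kq)"
    using kq_mult_pelem[OF v1 v2] by simp
  finally show ?thesis by simp
qed

lemma zr_path: "vp E \<sigma> t w \<Longrightarrow> zr \<cdot> path_elem (t,w) = zr"
  using ac_zero_left pelem_carrier by blast

lemma pelem_act_C: "x \<in> C \<Longrightarrow> vp E \<sigma> s w \<Longrightarrow> x \<cdot> path_elem (s,w) \<in> C"
  using ac_C pelem_carrier by blast

definition ee :: "'v set \<Rightarrow> ('v,'k) kq" where "ee t = path_elem (t, [])"

lemma ee_carrier: "t \<in> E \<Longrightarrow> ee t \<in> kq_carrier E \<sigma>"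
  unfolding ee_def by (rule pelem_carrier) simp

lemma ee_act: "y \<in> C \<Longrightarrow> s \<in> E \<Longrightarrow> y \<cdot> ee s = y \<Longrightarrow> vp E \<sigma> t w \<Longrightarrow> t \<noteq> s \<Longrightarrow>
   y \<cdot> path_elem (t, w) = zr"
proof -
  assume y: "y \<in> C" "y \<cdot> ee s = y" and s: "s \<in> E" and v: "vp E \<sigma> t w" and ts: "t \<noteq> s"
  have "y \<cdot> path_elem (t, w) = (y \<cdot> ee s) \<cdot> path_elem (t, w)" using y by simp
  also have "\<dots> = y \<cdot> kq_mult E \<sigma> (path_elem (s, [])) (path_elem (t,w))"
    unfolding ee_def by (rule ac_ac[OF y(1) pelem_carrier pelem_carrier[OF v]]) (use s in simp)
  also have "kq_mult E \<sigma> (path_elem (s, [])) (path_elem (t,w)) = (kq_zero :: ('v,'k) kq)"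
    using kq_mult_pelem[of s "[]" t w] s v ts by simp
  finally show ?thesis using ac_kq_zero[OF y(1)] by simp
qed

lemma ad_swap4: "a \<in> C \<Longrightarrow> b \<in> C \<Longrightarrow> p \<in> C \<Longrightarrow> q \<in> C \<Longrightarrow> (a \<oplus> b) \<oplus> (p \<oplus> q) = (a \<oplus> p) \<oplus> (b \<oplus> q)"
proof -
  assume h: "a \<in> C" "b \<in> C" "p \<in> C" "q \<in> C"
  have "(a \<oplus> b) \<oplus> (p \<oplus> q) = a \<oplus> (b \<oplus> (p \<oplus> q))" using ad_assoc h ad_C by metis
  also have "b \<oplus> (p \<oplus> q) = p \<oplus> (b \<oplus> q)" using ad_assoc ad_comm h ad_C by metis
  also have "a \<oplus> (p \<oplus> (b \<oplus> q)) = (a \<oplus> p) \<oplus> (b \<oplus> q)" using ad_assoc h ad_C by metis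
  finally show ?thesis .
qed

fun lcomb :: "(nat \<Rightarrow> 'm) \<Rightarrow> (nat \<Rightarrow> 'k) \<Rightarrow> nat \<Rightarrow> 'm" where
  "lcomb y c 0 = zr"
| "lcomb y c (Suc n) = lcomb y c n \<oplus> c n \<odot> y n"

lemma lc_C: "\<forall>k. y k \<in> C \<Longrightarrow> lcomb y c n \<in> C"
  by (induction n) (auto simp: z_C ad_C sm_C)

lemma lc_add: "\<forall>k. y k \<in> C \<Longrightarrow> lcomb y (\<lambda>k. c k + d k) n = lcomb y c n \<oplus> lcomb y d n"
proof (induction n)
  case 0 then show ?case using z_ad z_C by simp
next
  case (Suc n)
  then show ?case using ad_swap4[of "lcomb y c n" "lcomb y d n" "c n \<odot> y n" "d n \<odot> y n"] lc_C sm_C sm_add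
    by simp
qed

lemma lc_smul: "\<forall>k. y k \<in> C \<Longrightarrow> e \<odot> lcomb y c n = lcomb y (\<lambda>k. e * c k) n"
proof (induction n)
  case 0 then show ?case using sm_zero_right by simp
next
  case (Suc n)
  then show ?case using sm_ad lc_C sm_C sm_mult by simp
qed

lemma lc_act: "\<forall>k. y k \<in> C \<Longrightarrow> f \<in> kq_carrier E \<sigma> \<Longrightarrow> (lcomb y c n) \<cdot> f = lcomb (\<lambda>k. y k \<cdot> f) c n"
proof (induction n)
  case 0 then show ?case using ac_zero_left by simp
next
  case (Suc n)
  then show ?case using ac_ad lc_C sm_C sm_ac by simp
qed

lemma lc_cong: "\<forall>k<n. c k = d k \<Longrightarrow> lcomb y c n = lcomb y d n"
  by (induction n) auto

lemma lc_zero: "\<forall>k. y k \<in> C \<Longrightarrow> \<forall>k<n. c k = 0 \<Longrightarrow> lcomb y c n = zr"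
  by (induction n) (auto simp: sm_zero_left z_ad z_C)

lemma lc_single: "\<forall>k. y k \<in> C \<Longrightarrow> lcomb y (\<lambda>k. if k = j then 1 else 0) n = (if j < n then y j else zr)"
proof (induction n)
  case 0 then show ?case by simp
next
  case (Suc n)
  show ?case
  proof (cases "j < n")
    case True then show ?thesis using Suc sm_zero_left ad_z by simp
  next
    case False
    then show ?thesis using Suc sm_zero_left ad_z z_ad sm_one z_C by (cases "j = n") auto
  qed
qed

lemma lc_vanish: "\<forall>k. y k \<in> C \<Longrightarrow> j < n \<Longrightarrow> \<forall>k<j. c k = 0 \<Longrightarrow> \<forall>k. j < k \<and> k < n \<longrightarrow> y k = zr \<Longrightarrow>
   lcomb y c n = c j \<odot> y j"
proof (induction n)
  case 0 then show ?case by simp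
next
  case (Suc n)
  show ?case
  proof (cases "j = n")
    case True
    then have "lcomb y c n = zr" using lc_zero Suc by blast
    then show ?thesis using True z_ad sm_C Suc by simp
  next
    case False
    then have "lcomb y c n = c j \<odot> y j" using Suc by simp
    moreover have "y n = zr" using Suc False by simp
    ultimately show ?thesis using sm_zero_right ad_z sm_C Suc by simp
  qed
qed

lemma lc_split0: "\<forall>k. y k \<in> C \<Longrightarrow> 0 < n \<Longrightarrow> lcomb y c n = c 0 \<odot> y 0 \<oplus> lcomb y (c(0:=0)) n"
proof (induction n)
  case 0 then show ?case by simp
next
  case (Suc n)
  show ?case
  proof (cases "n = 0")
    case True then show ?thesis using Suc z_ad ad_z sm_zero_left sm_C z_C by simp
  next
    case False
    then have "lcomb y c (Suc n) = (c 0 \<odot> y 0 \<oplus> lcomb y (c(0:=0)) n) \<oplus> c n \<odot> y n" using Suc by (simp del: fun_upd_apply)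
    also have "\<dots> = c 0 \<odot> y 0 \<oplus> (lcomb y (c(0:=0)) n \<oplus> c n \<odot> y n)" using ad_assoc sm_C lc_C Suc by metis
    moreover have "(c(0:=0)) n = c n" using False by simp
    ultimately show ?thesis by (simp del: fun_upd_apply)
  qed
qed

lemma simple_line:
  assumes y: "y \<in> C" "y \<noteq> zr" and S: "S = {c \<odot> y | c. True}"
  shows "simple_mod E \<sigma> (restr M S)"
  unfolding simple_mod_def
proof (intro conjI allI impI)
  have "y \<in> S" using S sm_one y by (metis (mono_tags, lifting) mem_Collect_eq)
  then show "carr (restr M S) \<noteq> {mzero (restr M S)}" using y by (auto simp: restr_def)
next
  fix N assume N: "submod E \<sigma> (restr M S) N"
  then have NS: "N \<subseteq> S" and z: "zr \<in> N" and smN: "\<forall>c. \<forall>x\<in>N. c \<odot> x \<in> N"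
    by (auto simp: submod_def restr_def)
  show "N = {mzero (restr M S)} \<or> N = carr (restr M S)"
  proof (cases "N = {zr}")
    case True then show ?thesis by (simp add: restr_def)
  next
    case False
    then obtain v where v: "v \<in> N" "v \<noteq> zr" using z by blast
    then obtain c where c: "v = c \<odot> y" using NS S by blast
    have "c \<noteq> 0" using c v sm_zero_left y by auto
    then have "y = inverse c \<odot> v" using c sm_mult[OF y(1), of "inverse c" c] sm_one y by simp
    then have yN: "y \<in> N" using smN v by simp
    have "S \<subseteq> N" using S smN yN by blast
    then show ?thesis using NS by (simp add: restr_def)
  qed
qed

lemma restr_C: "restr M C = M" by (simp add: restr_def)

lemma lincomb_in: "sub N \<Longrightarrow> set bs \<subseteq> N \<Longrightarrow> length cs = length bs \<Longrightarrow> lincomb M cs bs \<in> N"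
proof (induction bs arbitrary: cs)
  case Nil then show ?case by (simp add: lincomb_def submod_def)
next
  case (Cons b bs)
  then obtain c cs' where cs: "cs = c # cs'" by (cases cs) auto
  have "lincomb M cs' bs \<in> N" using Cons cs by simp
  moreover have "c \<odot> b \<in> N" using Cons.prems by (simp add: submod_def)
  ultimately show ?case using Cons.prems cs by (simp add: lincomb_def submod_def)
qed

lemma ee_idem: "t \<in> E \<Longrightarrow> b \<in> C \<Longrightarrow> (b \<cdot> ee t) \<cdot> ee t = b \<cdot> ee t"
proof -
  assume t: "t \<in> E" and b: "b \<in> C"
  have "(b \<cdot> ee t) \<cdot> ee t = b \<cdot> kq_mult E \<sigma> (ee t) (ee t)" using ac_ac[OF b ee_carrier ee_carrier] t by simp
  also have "kq_mult E \<sigma> (ee t) (ee t) = ee t" unfolding ee_def using kq_mult_pelem[of t "[]" t "[]"] t by simp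
  finally show ?thesis .
qed

lemma sum_ee: assumes b: "b \<in> C" and N: "sub N" and h: "\<forall>t\<in>E. b \<cdot> ee t \<in> N" shows "b \<in> N"
proof -
  have "\<forall>T. T \<subseteq> E \<longrightarrow> (\<lambda>q. \<Sum>t\<in>T. (path_elem (t,[]) :: ('v,'k) kq) q) \<in> kq_carrier E \<sigma> \<and> b \<cdot> (\<lambda>q. \<Sum>t\<in>T. (path_elem (t,[]) :: ('v,'k) kq) q) \<in> N"
  proof (intro allI impI)
    fix T assume T: "T \<subseteq> E"
    then have "finite T" using finE finite_subset by blast
    then show "(\<lambda>q. \<Sum>t\<in>T. (path_elem (t,[]) :: ('v,'k) kq) q) \<in> kq_carrier E \<sigma> \<and> b \<cdot> (\<lambda>q. \<Sum>t\<in>T. (path_elem (t,[]) :: ('v,'k) kq) q) \<in> N"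
      using T
    proof (induction T rule: finite_induct)
      case empty
      have "(\<lambda>q. \<Sum>t\<in>{}. (path_elem (t,[]) :: ('v,'k) kq) q) = kq_zero" by (simp add: kq_zero_def)
      then show ?case using kq_zero_carrier ac_kq_zero[OF b] N by (simp add: submod_def)
    next
      case (insert t T)
      have eq: "(\<lambda>q. \<Sum>t\<in>insert t T. (path_elem (t,[]) :: ('v,'k) kq) q) = kq_add (\<lambda>q. \<Sum>t\<in>T. (path_elem (t,[]) :: ('v,'k) kq) q) (ee t)"
        using insert(1,2) by (simp add: kq_add_def ee_def add.commute)
      have tE: "t \<in> E" using insert by simp
      have IH: "(\<lambda>q. \<Sum>t\<in>T. (path_elem (t,[]) :: ('v,'k) kq) q) \<in> kq_carrier E \<sigma>" "b \<cdot> (\<lambda>q. \<Sum>t\<in>T. (path_elem (t,[]) :: ('v,'k) kq) q) \<in> N"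
        using insert by auto
      show ?case unfolding eq
        using kq_add_carrier[OF IH(1) ee_carrier[OF tE]] ac_add[OF b IH(1) ee_carrier[OF tE]] IH(2) h tE N
        by (simp add: submod_def)
    qed
  qed
  then have "b \<cdot> kq_one E \<in> N" using kq_one_sum[where 'k='k] by auto
  then show ?thesis using ac_one b by simp
qed

lemma chain_max: "finite F \<Longrightarrow> F \<noteq> {} \<Longrightarrow> \<forall>A\<in>F. \<forall>B\<in>F. A \<subseteq> B \<or> B \<subseteq> A \<Longrightarrow> \<exists>X\<in>F. \<forall>A\<in>F. A \<subseteq> X"
proof (induction F rule: finite_ne_induct)
  case (singleton x) then show ?case by auto
next
  case (insert x F)
  then obtain X where X: "X \<in> F" "\<forall>A\<in>F. A \<subseteq> X" by auto
  show ?case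
  proof (cases "x \<subseteq> X")
    case True then show ?thesis using X by auto
  next
    case False then have "X \<subseteq> x" using insert X by auto
    then show ?thesis using X by auto
  qed
qed

lemma gen_zr: "gen zr = {zr}"
proof
  show "gen zr \<subseteq> {zr}" using ac_zero_left unfolding gen_def by blast
  show "{zr} \<subseteq> gen zr" using gen_mem z_C by blast
qed

end

locale bgm = kqm V E \<sigma> M for V :: "'v set" and E and \<sigma> and M :: "('m,'v,'k::field) kqmod" +
  assumes bm: "bga_module E \<sigma> M"
begin

lemma kill: "x \<in> C \<Longrightarrow> r \<in> bga_rels E \<sigma> \<Longrightarrow> x \<cdot> r = zr"
  using bm kq_ideal.gen[of r "bga_rels E \<sigma>" E \<sigma>] by (auto simp: bga_module_def bga_ideal_def)

lemma kill_pair: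
  assumes x: "x \<in> C" and v: "vp E \<sigma> s (w1 @ [a,b] @ w2)" and r: "(path_elem (asrc a, [a,b]) :: ('v,'k) kq) \<in> bga_rels E \<sigma>"
  shows "x \<cdot> path_elem (s, w1 @ [a,b] @ w2) = zr"
proof -
  have v1: "vp E \<sigma> s w1" and v2: "vp E \<sigma> (pe \<sigma> s w1) ([a,b] @ w2)" using v by (auto simp: vp_append)
  have sa: "pe \<sigma> s w1 = asrc a" using v2 by simp
  have v3: "vp E \<sigma> (pe \<sigma> s w1) ([a,b] @ w2)" using v2 by simp
  have x1: "x \<cdot> path_elem (s, w1) \<in> C" using pelem_act_C[OF x v1] .
  have "x \<cdot> path_elem (s, w1 @ [a,b] @ w2) = (x \<cdot> path_elem (s, w1)) \<cdot> path_elem (pe \<sigma> s w1, [a,b] @ w2)"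
    using act_app[OF x v] .
  also have "\<dots> = ((x \<cdot> path_elem (s, w1)) \<cdot> path_elem (pe \<sigma> s w1, [a,b])) \<cdot> path_elem (pe \<sigma> (pe \<sigma> s w1) [a,b], w2)"
    using act_app[OF x1 v3] by simp
  also have "(x \<cdot> path_elem (s, w1)) \<cdot> path_elem (pe \<sigma> s w1, [a,b]) = zr"
    using kill[OF x1] r sa by simp
  also have "zr \<cdot> path_elem (pe \<sigma> (pe \<sigma> s w1) [a,b], w2) = zr"
    by (rule ac_zero_left, rule pelem_carrier) (use v3 in \<open>simp add: vp_append\<close>)
  finally show ?thesis .
qed

lemma path_shape:
  assumes v: "vp E \<sigma> t w" and ne: "w \<noteq> []" and h: "hd w = (t, \<alpha>)"
    and g: "\<forall>i. Suc i < length w \<longrightarrow> w ! Suc i = (\<sigma> (snd (w ! i)) (fst (w ! i)), snd (w ! i))"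
  shows "w = arrs t \<alpha> (length w)"
proof (rule nth_equalityI)
  show "length w = length (arrs t \<alpha> (length w))" by (simp add: arrs_len)
  have "\<forall>i. i < length w \<longrightarrow> w ! i = ((\<sigma> \<alpha> ^^ i) t, \<alpha>)"
  proof (intro allI)
    fix i show "i < length w \<longrightarrow> w ! i = ((\<sigma> \<alpha> ^^ i) t, \<alpha>)"
    proof (induction i)
      case 0 then show ?case using h ne by (simp add: hd_conv_nth)
    next
      case (Suc i) then show ?case using g by auto
    qed
  qed
  then show "\<And>i. i < length w \<Longrightarrow> w ! i = arrs t \<alpha> (length w) ! i" by (simp add: arrs_def)
qed

lemma single_shape:
  assumes c: "card E = 1" and v: "vp E \<sigma> t w" and ne: "w \<noteq> []" and h: "hd w = (t, \<alpha>)"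
  shows "w = arrs t \<alpha> (length w)"
proof -
  have "set w \<subseteq> qarrows E" using v
  proof (induction w arbitrary: t)
    case (Cons a w) then show ?case by auto
  qed simp
  then have all: "\<forall>a\<in>set w. a = (single_edge E, SOME \<alpha>. \<alpha> \<in> single_edge E)" using c by (auto simp: qarrows_def)
  then have "hd w = (single_edge E, SOME \<alpha>. \<alpha> \<in> single_edge E)" using ne by simp
  then have ta: "t = single_edge E" "\<alpha> = (SOME \<alpha>. \<alpha> \<in> single_edge E)" using h by auto
  have "\<sigma> \<alpha> t = t" using single_sig[OF c] single_vertex[OF c] ta by simp
  show ?thesis
  proof (rule path_shape[OF v ne h], intro allI impI)
    fix i assume i: "Suc i < length w"
    then have "w ! i = (t, \<alpha>)" "w ! Suc i = (t, \<alpha>)" using all ta nth_mem[of i w] nth_mem[of "Suc i" w] by auto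
    then show "w ! Suc i = (\<sigma> (snd (w ! i)) (fst (w ! i)), snd (w ! i))" using \<open>\<sigma> \<alpha> t = t\<close> by simp
  qed
qed

lemma kill_or_shape:
  assumes x: "x \<in> C" and v: "vp E \<sigma> t w" and ne: "w \<noteq> []" and h: "hd w = (t, \<alpha>)"
  shows "x \<cdot> path_elem (t, w) = zr \<or> w = arrs t \<alpha> (length w)"
proof (cases "card E = 1")
  case True then show ?thesis using single_shape v ne h by blast
next
  case c: False
  show ?thesis
  proof (cases "\<forall>i. Suc i < length w \<longrightarrow> w ! Suc i = (\<sigma> (snd (w ! i)) (fst (w ! i)), snd (w ! i))")
    case True then show ?thesis using path_shape[OF v ne h] by blast
  next
    case False
    then obtain i where i: "Suc i < length w" "w ! Suc i \<noteq> (\<sigma> (snd (w ! i)) (fst (w ! i)), snd (w ! i))" by blast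
    have wsplit: "w = take i w @ [w ! i, w ! Suc i] @ drop (Suc (Suc i)) w"
      using i(1) by (metis Cons_nth_drop_Suc Suc_lessD append_Cons append_Nil append_take_drop_id)
    have "vp E \<sigma> t (take i w @ [w ! i, w ! Suc i] @ drop (Suc (Suc i)) w)" using v wsplit by simp
    then have vv: "vp E \<sigma> (pe \<sigma> t (take i w)) ([w ! i, w ! Suc i] @ drop (Suc (Suc i)) w)" by (simp add: vp_append)
    then have q: "w ! i \<in> qarrows E" "w ! Suc i \<in> qarrows E" "atgt \<sigma> (w ! i) = asrc (w ! Suc i)" by auto
    have r: "(path_elem (asrc (w ! i), [w ! i, w ! Suc i]) :: ('v,'k) kq) \<in> bga_rels E \<sigma>"
      using rel_bad[OF c q i(2)] .
    have "x \<cdot> path_elem (t, take i w @ [w ! i, w ! Suc i] @ drop (Suc (Suc i)) w) = zr"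
      by (rule kill_pair[OF x _ r]) (use v wsplit in simp)
    then show ?thesis using wsplit by simp
  qed
qed

end


locale unis = bgm V E \<sigma> M for V :: "'v set" and E and \<sigma> and M :: "('m,'v,'k::field) kqmod" +
  assumes uni: "uniserial E \<sigma> M"
begin

lemma C_ne: "C \<noteq> {zr}" using uni by (simp add: uniserial_def)
lemma chain: "sub N \<Longrightarrow> sub N' \<Longrightarrow> N \<subseteq> N' \<or> N' \<subseteq> N" using uni by (simp add: uniserial_def)

lemma gen_exists: "\<exists>u s. s \<in> E \<and> u \<in> C \<and> u \<cdot> ee s = u \<and> gen u = C \<and> u \<noteq> zr"
proof -
  obtain bs where bs: "set bs \<subseteq> C" "\<forall>x\<in>C. \<exists>cs. length cs = length bs \<and> x = lincomb M cs bs" using basis by blast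
  have bsne: "bs \<noteq> []"
  proof
    assume "bs = []"
    then have "\<forall>x\<in>C. x = zr" using bs by (simp add: lincomb_def)
    then show False using C_ne z_C by blast
  qed
  define F where "F = (\<lambda>(b,t). gen (b \<cdot> ee t)) ` (set bs \<times> E)"
  have Fsub: "\<forall>A\<in>F. sub A" using bs ee_carrier ac_C gen_sub unfolding F_def by auto
  have f1: "finite F" using finE unfolding F_def by simp
  have f2: "F \<noteq> {}" using bsne Ene unfolding F_def by simp
  have f3: "\<forall>A\<in>F. \<forall>B\<in>F. A \<subseteq> B \<or> B \<subseteq> A" using Fsub chain by blast
  obtain X where X: "X \<in> F" "\<forall>A\<in>F. A \<subseteq> X" using chain_max[OF f1 f2 f3] by blast
  then obtain b0 t0 where b0: "b0 \<in> set bs" "t0 \<in> E" "X = gen (b0 \<cdot> ee t0)" unfolding F_def by auto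
  define u where "u = b0 \<cdot> ee t0"
  have uC: "u \<in> C" using b0 bs ac_C ee_carrier u_def by auto
  have subX: "sub X" using X Fsub by blast
  have "\<forall>b\<in>set bs. b \<in> X"
  proof
    fix b assume b: "b \<in> set bs"
    have "\<forall>t\<in>E. b \<cdot> ee t \<in> X"
    proof
      fix t assume t: "t \<in> E"
      have "b \<cdot> ee t \<in> gen (b \<cdot> ee t)" using gen_mem ac_C ee_carrier t b bs by blast
      moreover have "gen (b \<cdot> ee t) \<in> F" using b t unfolding F_def by blast
      ultimately show "b \<cdot> ee t \<in> X" using X by blast
    qed
    then show "b \<in> X" using sum_ee subX b bs by blast
  qed
  then have bX: "set bs \<subseteq> X" by blast
  have "C \<subseteq> X"
  proof
    fix x assume "x \<in> C"
    then obtain cs where "length cs = length bs" "x = lincomb M cs bs" using bs by blast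
    then show "x \<in> X" using lincomb_in[OF subX bX] by simp
  qed
  moreover have "X \<subseteq> C" using subX by (simp add: submod_def)
  ultimately have gC: "gen u = C" using b0 u_def by simp
  have "u \<noteq> zr" using gC gen_zr C_ne by auto
  moreover have "u \<cdot> ee t0 = u" using ee_idem b0 bs u_def by auto
  ultimately show ?thesis using gC uC b0 by blast
qed

end


locale ugen = unis V E \<sigma> M for V :: "'v set" and E and \<sigma> and M :: "('m,'v,'k::field) kqmod" +
  fixes u s
  assumes sE: "s \<in> E" and uC: "u \<in> C" and ue: "u \<cdot> ee s = u" and ug: "gen u = C" and unz: "u \<noteq> zr"
begin

lemma u_other: "vp E \<sigma> t w \<Longrightarrow> t \<noteq> s \<Longrightarrow> u \<cdot> path_elem (t, w) = zr"
  using ee_act[OF uC sE ue] by blast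

lemma u_cons: "vp E \<sigma> s (a # w) \<Longrightarrow> u \<cdot> path_elem (s, a # w) = (u \<cdot> path_elem (s, [a])) \<cdot> path_elem (atgt \<sigma> a, w)"
  using act_app[OF uC, of s "[a]" w] by simp

lemma D:
  assumes c: "card E \<noteq> 1" and qg: "(s,\<gamma>) \<in> qarrows E" and qd: "(s,\<delta>) \<in> qarrows E" and gd: "\<gamma> \<noteq> \<delta>"
    and g: "g \<in> kq_carrier E \<sigma>"
  shows "((u \<cdot> path_elem (s,[(s,\<gamma>)])) \<cdot> g) \<cdot> ee (\<sigma> \<delta> s) = zr"
proof -
  define y where "y = u \<cdot> path_elem (s,[(s,\<gamma>)])"
  have vg: "vp E \<sigma> s [(s,\<gamma>)]" using qg atgt_E sE by (simp add: asrc_def)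
  have yC: "y \<in> C" using y_def pelem_act_C[OF uC vg] by simp
  have rE: "\<sigma> \<delta> s \<in> E" using qd sig_in qa_mem by blast
  have key: "(y \<cdot> path_elem (t,w)) \<cdot> ee (\<sigma> \<delta> s) = zr" if v: "vp E \<sigma> t w" for t w
  proof (cases "t = \<sigma> \<gamma> s")
    case False
    have "y \<cdot> path_elem (t,w) = u \<cdot> kq_mult E \<sigma> (path_elem (s,[(s,\<gamma>)])) (path_elem (t,w))"
      using ac_ac[OF uC pelem_carrier[OF vg] pelem_carrier[OF v]] y_def by simp
    also have "kq_mult E \<sigma> (path_elem (s,[(s,\<gamma>)])) (path_elem (t,w)) = (kq_zero :: ('v,'k) kq)"
      using kq_mult_pelem[OF vg v] False by (simp add: atgt_def)
    finally show ?thesis using ac_kq_zero[OF uC] ac_zero_left ee_carrier[OF rE] by simp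
  next
    case True
    have vv: "vp E \<sigma> s ((s,\<gamma>) # w)" using vg v True by (simp add: atgt_def)
    have "y \<cdot> path_elem (t,w) = u \<cdot> kq_mult E \<sigma> (path_elem (s,[(s,\<gamma>)])) (path_elem (t,w))"
      using ac_ac[OF uC pelem_carrier[OF vg] pelem_carrier[OF v]] y_def by simp
    also have "kq_mult E \<sigma> (path_elem (s,[(s,\<gamma>)])) (path_elem (t,w)) = (path_elem (s, (s,\<gamma>) # w) :: ('v,'k) kq)"
      using kq_mult_pelem[OF vg v] True by (simp add: atgt_def)
    finally have yp: "y \<cdot> path_elem (t,w) = u \<cdot> path_elem (s, (s,\<gamma>) # w)" .
    have "(u \<cdot> path_elem (s, (s,\<gamma>) # w)) \<cdot> ee (\<sigma> \<delta> s) = u \<cdot> kq_mult E \<sigma> (path_elem (s, (s,\<gamma>) # w)) (path_elem (\<sigma> \<delta> s, []))"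
      using ac_ac[OF uC pelem_carrier[OF vv] ee_carrier[OF rE]] by (simp add: ee_def)
    also have "\<dots> = zr"
    proof (cases "pe \<sigma> s ((s,\<gamma>) # w) = \<sigma> \<delta> s")
      case False
      have "kq_mult E \<sigma> (path_elem (s, (s,\<gamma>) # w)) (path_elem (\<sigma> \<delta> s, [])) = (kq_zero :: ('v,'k) kq)"
        using kq_mult_pelem[OF vv, of "\<sigma> \<delta> s" "[]"] rE False by simp
      then show ?thesis using ac_kq_zero[OF uC] by simp
    next
      case True
      have "u \<cdot> path_elem (s, (s,\<gamma>) # w) = zr"
      proof -
        have "u \<cdot> path_elem (s, (s,\<gamma>) # w) = zr \<or> (s,\<gamma>) # w = arrs s \<gamma> (length ((s,\<gamma>) # w))"
          using kill_or_shape[OF uC vv] by simp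
        moreover have "(s,\<gamma>) # w \<noteq> arrs s \<gamma> (length ((s,\<gamma>) # w))"
        proof
          assume "(s,\<gamma>) # w = arrs s \<gamma> (length ((s,\<gamma>) # w))"
          then have "pe \<sigma> s ((s,\<gamma>) # w) = (\<sigma> \<gamma> ^^ length ((s,\<gamma>) # w)) s" using vp_arrs[OF qg] by metis
          then show False using True two_dirs[OF c qg qd gd, of "length ((s,\<gamma>) # w)"] by argo
        qed
        ultimately show ?thesis by blast
      qed
      moreover have "kq_mult E \<sigma> (path_elem (s, (s,\<gamma>) # w)) (path_elem (\<sigma> \<delta> s, [])) = (path_elem (s, (s,\<gamma>) # w) :: ('v,'k) kq)"
        using kq_mult_pelem[OF vv, of "\<sigma> \<delta> s" "[]"] rE True by simp
      ultimately show ?thesis by simp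
    qed
    finally show ?thesis using yp by simp
  qed
  have "(y \<cdot> g) \<cdot> ee (\<sigma> \<delta> s) = zr"
  proof (rule kq_induct[OF g, where Q="\<lambda>g. (y \<cdot> g) \<cdot> ee (\<sigma> \<delta> s) = zr"])
    show "(y \<cdot> kq_zero) \<cdot> ee (\<sigma> \<delta> s) = zr" using ac_kq_zero[OF yC] ac_zero_left ee_carrier[OF rE] by simp
  next
    fix g' t w c
    assume g': "g' \<in> kq_carrier E \<sigma>" and IH: "(y \<cdot> g') \<cdot> ee (\<sigma> \<delta> s) = zr" and v: "vp E \<sigma> t w"
    have pc: "path_elem (t,w) \<in> kq_carrier E \<sigma>" using pelem_carrier[OF v] .
    have "(y \<cdot> kq_add g' (kq_smul c (path_elem (t, w)))) \<cdot> ee (\<sigma> \<delta> s)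
        = (y \<cdot> g' \<oplus> c \<odot> (y \<cdot> path_elem (t, w))) \<cdot> ee (\<sigma> \<delta> s)"
      using ac_add[OF yC g' kq_smul_carrier[OF pc]] ac_smul[OF yC pc] by simp
    also have "\<dots> = (y \<cdot> g') \<cdot> ee (\<sigma> \<delta> s) \<oplus> c \<odot> ((y \<cdot> path_elem (t, w)) \<cdot> ee (\<sigma> \<delta> s))"
      using ac_ad[OF ac_C[OF yC g'] sm_C[OF ac_C[OF yC pc]] ee_carrier[OF rE]] sm_ac[OF ac_C[OF yC pc] ee_carrier[OF rE]] by simp
    also have "\<dots> = zr" using IH key[OF v] sm_zero_right z_ad z_C by simp
    finally show "(y \<cdot> kq_add g' (kq_smul c (path_elem (t, w)))) \<cdot> ee (\<sigma> \<delta> s) = zr" .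
  qed
  then show ?thesis using y_def by simp
qed

lemma arrow_tgt: "(s,\<gamma>) \<in> qarrows E \<Longrightarrow> (u \<cdot> path_elem (s,[(s,\<gamma>)])) \<cdot> ee (\<sigma> \<gamma> s) = u \<cdot> path_elem (s,[(s,\<gamma>)])"
proof -
  assume q: "(s,\<gamma>) \<in> qarrows E"
  have vg: "vp E \<sigma> s [(s,\<gamma>)]" using q atgt_E sE by (simp add: asrc_def)
  have rE: "\<sigma> \<gamma> s \<in> E" using q sig_in qa_mem by blast
  have "(u \<cdot> path_elem (s,[(s,\<gamma>)])) \<cdot> ee (\<sigma> \<gamma> s) = u \<cdot> kq_mult E \<sigma> (path_elem (s,[(s,\<gamma>)])) (path_elem (\<sigma> \<gamma> s, []))"
    using ac_ac[OF uC pelem_carrier[OF vg] ee_carrier[OF rE]] by (simp add: ee_def)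
  also have "kq_mult E \<sigma> (path_elem (s,[(s,\<gamma>)])) (path_elem (\<sigma> \<gamma> s, [])) = (path_elem (s,[(s,\<gamma>)]) :: ('v,'k) kq)"
    using kq_mult_pelem[OF vg, of "\<sigma> \<gamma> s" "[]"] rE by (simp add: atgt_def)
  finally show ?thesis .
qed

lemma dead:
  assumes qa: "(s,\<alpha>) \<in> qarrows E" and nz: "u \<cdot> path_elem (s,[(s,\<alpha>)]) \<noteq> zr"
    and qb: "(s,\<beta>) \<in> qarrows E" and ab: "\<beta> \<noteq> \<alpha>"
  shows "u \<cdot> path_elem (s,[(s,\<beta>)]) = zr"
proof -
  have c: "card E \<noteq> 1"
  proof
    assume "card E = 1"
    then show False using qa qb ab by (simp add: qarrows_def)
  qed
  define ya where "ya = u \<cdot> path_elem (s,[(s,\<alpha>)])"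
  define yb where "yb = u \<cdot> path_elem (s,[(s,\<beta>)])"
  have va: "vp E \<sigma> s [(s,\<alpha>)]" using qa atgt_E sE by (simp add: asrc_def)
  have vb: "vp E \<sigma> s [(s,\<beta>)]" using qb atgt_E sE by (simp add: asrc_def)
  have yaC: "ya \<in> C" using ya_def pelem_act_C[OF uC va] by simp
  have ybC: "yb \<in> C" using yb_def pelem_act_C[OF uC vb] by simp
  have "gen ya \<subseteq> gen yb \<or> gen yb \<subseteq> gen ya" using chain gen_sub yaC ybC by blast
  then show ?thesis
  proof
    assume "gen ya \<subseteq> gen yb"
    then have "ya \<in> gen yb" using gen_mem yaC by blast
    then obtain g where g: "g \<in> kq_carrier E \<sigma>" "ya = yb \<cdot> g" by (auto simp: gen_def)
    have "ya = ya \<cdot> ee (\<sigma> \<alpha> s)" using arrow_tgt[OF qa] ya_def by simp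
    also have "\<dots> = zr" using D[OF c qb qa _ g(1)] ab g(2) yb_def by simp
    finally show ?thesis using nz ya_def by simp
  next
    assume "gen yb \<subseteq> gen ya"
    then have "yb \<in> gen ya" using gen_mem ybC by blast
    then obtain g where g: "g \<in> kq_carrier E \<sigma>" "yb = ya \<cdot> g" by (auto simp: gen_def)
    have "yb = yb \<cdot> ee (\<sigma> \<beta> s)" using arrow_tgt[OF qb] yb_def by simp
    also have "\<dots> = zr" using D[OF c qa qb _ g(1)] ab g(2) ya_def by simp
    finally show ?thesis using yb_def by simp
  qed
qed


lemma u_path_cons_zero:
  assumes h: "\<forall>\<beta>. (s,\<beta>) \<in> qarrows E \<longrightarrow> u \<cdot> path_elem (s,[(s,\<beta>)]) = zr" and v: "vp E \<sigma> s (a # w)"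
  shows "u \<cdot> path_elem (s, a # w) = zr"
proof -
  have a: "a \<in> qarrows E" "fst a = s" using v by (auto simp: asrc_def)
  then have "a = (s, snd a)" by (cases a) simp
  then have "u \<cdot> path_elem (s,[a]) = zr" using h a by metis
  moreover have "vp E \<sigma> (atgt \<sigma> a) w" using v by simp
  ultimately show ?thesis using u_cons[OF v] zr_path by simp
qed

lemma no_arrow_simple:
  assumes h: "\<forall>\<beta>. (s,\<beta>) \<in> qarrows E \<longrightarrow> u \<cdot> path_elem (s,[(s,\<beta>)]) = zr"
  shows "simple_mod E \<sigma> M"
proof -
  have pth: "u \<cdot> path_elem (t,w) = (if t = s \<and> w = [] then u else zr)" if v: "vp E \<sigma> t w" for t w
  proof (cases "t = s")
    case False then show ?thesis using u_other[OF v] by simp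
  next
    case True
    show ?thesis
    proof (cases w)
      case Nil then show ?thesis using True ue by (simp add: ee_def)
    next
      case (Cons a w') then show ?thesis using True u_path_cons_zero[OF h] v by simp
    qed
  qed
  have form: "u \<cdot> f = f (s,[]) \<odot> u" if f: "f \<in> kq_carrier E \<sigma>" for f
  proof (rule kq_induct[OF f, where Q="\<lambda>g. u \<cdot> g = g (s,[]) \<odot> u"])
    show "u \<cdot> kq_zero = kq_zero (s, []) \<odot> u" using ac_kq_zero[OF uC] sm_zero_left[OF uC] by (simp add: kq_zero_def)
  next
    fix g t w c
    assume g: "g \<in> kq_carrier E \<sigma>" and IH: "u \<cdot> g = g (s,[]) \<odot> u" and v: "vp E \<sigma> t w"
    have pc: "path_elem (t,w) \<in> kq_carrier E \<sigma>" using pelem_carrier[OF v] .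
    have "u \<cdot> kq_add g (kq_smul c (path_elem (t, w))) = g (s,[]) \<odot> u \<oplus> c \<odot> (if t = s \<and> w = [] then u else zr)"
      using ac_add[OF uC g kq_smul_carrier[OF pc]] ac_smul[OF uC pc] IH pth[OF v] by simp
    also have "\<dots> = (kq_add g (kq_smul c (path_elem (t, w)))) (s,[]) \<odot> u"
    proof (cases "t = s \<and> w = []")
      case True
      then show ?thesis using sm_add[OF uC, of "g (s,[])" c] by (auto simp: kq_add_def kq_smul_def path_elem_def)
    next
      case False
      then show ?thesis using sm_zero_right ad_z sm_C[OF uC] by (auto simp: kq_add_def kq_smul_def path_elem_def)
    qed
    finally show "u \<cdot> kq_add g (kq_smul c (path_elem (t, w))) = (kq_add g (kq_smul c (path_elem (t, w)))) (s,[]) \<odot> u" .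
  qed
  have "C = {c \<odot> u | c. True}"
  proof
    show "C \<subseteq> {c \<odot> u | c. True}"
    proof
      fix y assume "y \<in> C"
      then obtain f where "f \<in> kq_carrier E \<sigma>" "y = u \<cdot> f" using ug by (auto simp: gen_def)
      then show "y \<in> {c \<odot> u | c. True}" using form by blast
    qed
    show "{c \<odot> u | c. True} \<subseteq> C" using sm_C uC by blast
  qed
  then show ?thesis using simple_line[OF uC unz] restr_C by metis
qed

end

locale ustr = ugen V E \<sigma> M u s for V :: "'v set" and E and \<sigma> and M :: "('m,'v,'k::field) kqmod" and u s +
  fixes \<alpha>
  assumes qa: "(s,\<alpha>) \<in> qarrows E" and anz: "u \<cdot> path_elem (s,[(s,\<alpha>)]) \<noteq> zr"
begin

definition x :: "nat \<Rightarrow> 'm" where "x k = u \<cdot> path_elem (s, arrs s \<alpha> k)"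

lemma vP: "vp E \<sigma> s (arrs s \<alpha> k)" using vp_arrs[OF qa] by blast
lemma peP: "pe \<sigma> s (arrs s \<alpha> k) = (\<sigma> \<alpha> ^^ k) s" using vp_arrs[OF qa] by blast
lemma xC: "x k \<in> C" unfolding x_def using pelem_act_C[OF uC vP] .
lemma xC': "\<forall>k. x k \<in> C" using xC by blast
lemma x0: "x 0 = u" using ue by (simp add: x_def arrs_def ee_def)
lemma aE: "\<alpha> \<in> s" using qa qa_mem by blast

lemma x_add: "x (k + m) = x k \<cdot> path_elem ((\<sigma> \<alpha> ^^ k) s, arrs ((\<sigma> \<alpha> ^^ k) s) \<alpha> m)"
proof -
  have "x (k + m) = u \<cdot> path_elem (s, arrs s \<alpha> k @ arrs ((\<sigma> \<alpha> ^^ k) s) \<alpha> m)" by (simp add: x_def arrs_add)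
  also have "\<dots> = x k \<cdot> path_elem ((\<sigma> \<alpha> ^^ k) s, arrs ((\<sigma> \<alpha> ^^ k) s) \<alpha> m)"
    using act_app[OF uC, of s "arrs s \<alpha> k" "arrs ((\<sigma> \<alpha> ^^ k) s) \<alpha> m"] vP[of "k+m"] peP[of k]
    by (simp add: x_def arrs_add)
  finally show ?thesis .
qed

lemma vP2: "vp E \<sigma> ((\<sigma> \<alpha> ^^ k) s) (arrs ((\<sigma> \<alpha> ^^ k) s) \<alpha> m)"
  using vp_arrs[OF arrow_pow[OF qa]] by blast

lemma x_mono: "x k = zr \<Longrightarrow> k \<le> j \<Longrightarrow> x j = zr"
proof -
  assume a: "x k = zr" "k \<le> j"
  then obtain m where "j = k + m" using le_Suc_ex by blast
  then show ?thesis using x_add a zr_path[OF vP2] by simp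
qed

lemma Q3: "vp E \<sigma> t w \<Longrightarrow> u \<cdot> path_elem (t,w) = (if t = s \<and> w = arrs s \<alpha> (length w) then x (length w) else zr)"
proof -
  assume v: "vp E \<sigma> t w"
  show ?thesis
  proof (cases "t = s \<and> w = arrs s \<alpha> (length w)")
    case True then show ?thesis by (simp add: x_def)
  next
    case nt: False
    show ?thesis
    proof (cases "t = s")
      case False then show ?thesis using u_other[OF v] by simp
    next
      case True
      show ?thesis
      proof (cases w)
        case Nil then show ?thesis using nt True by (simp add: arrs_def)
      next
        case (Cons a w')
        have a: "a \<in> qarrows E" "fst a = s" using v True Cons by (auto simp: asrc_def)
        then have a2: "a = (s, snd a)" by (cases a) simp
        show ?thesis
        proof (cases "snd a = \<alpha>")
          case False
          have "u \<cdot> path_elem (s,[a]) = zr" using dead[OF qa anz, of "snd a"] a a2 False by metis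
          moreover have "vp E \<sigma> (atgt \<sigma> a) w'" using v True Cons by simp
          ultimately show ?thesis using u_cons v True Cons zr_path nt by simp
        next
          case sa: True
          have "u \<cdot> path_elem (t, w) = zr \<or> w = arrs t \<alpha> (length w)"
            by (rule kill_or_shape[OF uC v]) (use Cons a2 sa True in auto)
          then show ?thesis using nt True by auto
        qed
      qed
    qed
  qed
qed

lemma Q3': "vp E \<sigma> t w \<Longrightarrow> u \<cdot> path_elem (t,w) = zr \<or> u \<cdot> path_elem (t,w) = x (length w)"
  using Q3 by metis

lemma bound: "x (Suc (val E \<alpha>)) = zr"
proof (cases "card E = 1")
  case c: True
  have "E = {s}" using single_edge[OF c] sE by auto
  then have "edges_at E \<alpha> = {s}" using aE by (auto simp: edges_at_def)
  then have v1: "val E \<alpha> = 1" by (simp add: val_def)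
  have s1: "s = single_edge E" "\<alpha> = (SOME \<alpha>. \<alpha> \<in> single_edge E)" using qa c by (auto simp: qarrows_def)
  have "\<sigma> \<alpha> s = s" using single_sig[OF c] s1 aE by simp
  then have "arrs s \<alpha> 2 = [] @ [(s,\<alpha>), (s,\<alpha>)] @ []" by (simp add: arrs_def numeral_2_eq_2)
  moreover have "(path_elem (asrc (s,\<alpha>), [(s,\<alpha>), (s,\<alpha>)]) :: ('v,'k) kq) \<in> bga_rels E \<sigma>"
    using rel_single[OF c, of "(s,\<alpha>)"] s1 by (simp add: asrc_def)
  ultimately have "x 2 = zr" unfolding x_def using kill_pair[OF uC, of s "[]" "(s,\<alpha>)" "(s,\<alpha>)" "[]"] vP[of 2] \<open>\<sigma> \<alpha> s = s\<close> by (simp add: atgt_def)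
  then show ?thesis using v1 by (simp add: numeral_2_eq_2)
next
  case c: False
  have cs: "card s = 2" using Ecard sE by blast
  obtain \<beta> where b: "\<beta> \<in> s" "\<beta> \<noteq> \<alpha>"
  proof -
    have "s - {\<alpha>} \<noteq> {}" using cs aE by (metis card_1_singletonE card_Diff_singleton_if card.empty numeral_2_eq_2 One_nat_def diff_Suc_1 zero_neq_numeral card_Diff_singleton insert_Diff_single insert_absorb n_not_Suc_n)
    then show ?thesis using that by blast
  qed
  have vpos: "1 \<le> val E \<alpha>" using val_pos sE aE by blast
  have hd: "hd (cyc E \<sigma> s \<alpha>) = (s, \<alpha>)" using vpos by (simp add: cyc_arrs arrs_def hd_map upt_conv_Cons)
  have cf: "(\<sigma> \<alpha> ^^ val E \<alpha>) s = s" using cyc_fullE sE aE by blast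
  show ?thesis
  proof (cases "val E \<beta> = 1")
    case True
    have r: "(path_elem (s, cyc E \<sigma> s \<alpha> @ [hd (cyc E \<sigma> s \<alpha>)]) :: ('v,'k) kq) \<in> bga_rels E \<sigma>"
      using rel_type2[OF c sE aE b(1) b(2)[symmetric] True] .
    have "arrs s \<alpha> (Suc (val E \<alpha>)) = cyc E \<sigma> s \<alpha> @ [hd (cyc E \<sigma> s \<alpha>)]"
      using hd cf by (simp add: arrs_Suc cyc_arrs)
    then show ?thesis using kill[OF uC r] by (simp add: x_def)
  next
    case False
    have qb: "(s,\<beta>) \<in> qarrows E" using c sE b False by (simp add: qarrows_def)
    have db: "u \<cdot> path_elem (s,[(s,\<beta>)]) = zr" using dead[OF qa anz qb b(2)] .
    have r: "(kq_diff (path_elem (s, cyc E \<sigma> s \<alpha>)) (path_elem (s, cyc E \<sigma> s \<beta>)) :: ('v,'k) kq) \<in> bga_rels E \<sigma>"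
      using rel_type1[OF c sE aE b(1) b(2)[symmetric]] qa c False by (simp add: qarrows_def)
    have vA: "vp E \<sigma> s (cyc E \<sigma> s \<alpha>)" using vP by (simp add: cyc_arrs)
    have vB: "vp E \<sigma> s (cyc E \<sigma> s \<beta>)" using vp_arrs[OF qb] by (simp add: cyc_arrs)
    have kd: "(kq_diff (path_elem (s, cyc E \<sigma> s \<alpha>)) (path_elem (s, cyc E \<sigma> s \<beta>)) :: ('v,'k) kq)
        = kq_add (path_elem (s, cyc E \<sigma> s \<alpha>)) (kq_smul (-1) (path_elem (s, cyc E \<sigma> s \<beta>)))"
      by (simp add: kq_diff_def kq_add_def kq_smul_def)
    have "u \<cdot> path_elem (s, cyc E \<sigma> s \<alpha>) \<oplus> (-1) \<odot> (u \<cdot> path_elem (s, cyc E \<sigma> s \<beta>)) = zr"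
      using kill[OF uC r] kd ac_add[OF uC pelem_carrier[OF vA] kq_smul_carrier[OF pelem_carrier[OF vB]]]
        ac_smul[OF uC pelem_carrier[OF vB]] by simp
    then have eqAB: "u \<cdot> path_elem (s, cyc E \<sigma> s \<alpha>) = u \<cdot> path_elem (s, cyc E \<sigma> s \<beta>)"
      using diff_zero_eq pelem_act_C[OF uC vA] pelem_act_C[OF uC vB] by blast
    have vb1: "1 \<le> val E \<beta>" using val_pos sE b by blast
    then obtain rest where "cyc E \<sigma> s \<beta> = (s,\<beta>) # rest"
      by (simp add: cyc_arrs arrs_def upt_conv_Cons)
    then have "u \<cdot> path_elem (s, cyc E \<sigma> s \<beta>) = zr"
      using vB u_cons db zr_path by simp
    then have "x (val E \<alpha>) = zr" using eqAB by (simp add: x_def cyc_arrs)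
    then show ?thesis using x_mono by simp
  qed
qed


lemma bound2: assumes c: "card E \<noteq> 1" and qb: "(s,\<beta>) \<in> qarrows E" and b2: "\<beta> \<noteq> \<alpha>"
  shows "x (val E \<alpha>) = zr"
proof -
  have b: "\<beta> \<in> s" "val E \<beta> \<noteq> 1" using qb c by (auto simp: qarrows_def)
  have db: "u \<cdot> path_elem (s,[(s,\<beta>)]) = zr" using dead[OF qa anz qb b2] .
  have r: "(kq_diff (path_elem (s, cyc E \<sigma> s \<alpha>)) (path_elem (s, cyc E \<sigma> s \<beta>)) :: ('v,'k) kq) \<in> bga_rels E \<sigma>"
    using rel_type1[OF c sE aE b(1) b2[symmetric]] qa c b(2) by (simp add: qarrows_def)
  have vA: "vp E \<sigma> s (cyc E \<sigma> s \<alpha>)" using vP by (simp add: cyc_arrs)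
  have vB: "vp E \<sigma> s (cyc E \<sigma> s \<beta>)" using vp_arrs[OF qb] by (simp add: cyc_arrs)
  have kd: "(kq_diff (path_elem (s, cyc E \<sigma> s \<alpha>)) (path_elem (s, cyc E \<sigma> s \<beta>)) :: ('v,'k) kq)
      = kq_add (path_elem (s, cyc E \<sigma> s \<alpha>)) (kq_smul (-1) (path_elem (s, cyc E \<sigma> s \<beta>)))"
    by (simp add: kq_diff_def kq_add_def kq_smul_def)
  have "u \<cdot> path_elem (s, cyc E \<sigma> s \<alpha>) \<oplus> (-1) \<odot> (u \<cdot> path_elem (s, cyc E \<sigma> s \<beta>)) = zr"
    using kill[OF uC r] kd ac_add[OF uC pelem_carrier[OF vA] kq_smul_carrier[OF pelem_carrier[OF vB]]]
      ac_smul[OF uC pelem_carrier[OF vB]] by simp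
  then have eqAB: "u \<cdot> path_elem (s, cyc E \<sigma> s \<alpha>) = u \<cdot> path_elem (s, cyc E \<sigma> s \<beta>)"
    using diff_zero_eq pelem_act_C[OF uC vA] pelem_act_C[OF uC vB] by blast
  have vb1: "1 \<le> val E \<beta>" using val_pos sE b by blast
  then obtain rest where "cyc E \<sigma> s \<beta> = (s,\<beta>) # rest"
    by (simp add: cyc_arrs arrs_def upt_conv_Cons)
  then have "u \<cdot> path_elem (s, cyc E \<sigma> s \<beta>) = zr"
    using vB u_cons db zr_path by simp
  then show "x (val E \<alpha>) = zr" using eqAB by (simp add: x_def cyc_arrs)
qed

definition n where "n = (LEAST k. x k = zr)"

lemma xn: "x n = zr" unfolding n_def by (rule LeastI[of _ "Suc (val E \<alpha>)"]) (rule bound)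
lemma n_le: "n \<le> Suc (val E \<alpha>)" unfolding n_def by (rule Least_le) (rule bound)
lemma n_le2: "card E \<noteq> 1 \<Longrightarrow> (s,\<beta>) \<in> qarrows E \<Longrightarrow> \<beta> \<noteq> \<alpha> \<Longrightarrow> n \<le> val E \<alpha>"
  unfolding n_def by (rule Least_le) (rule bound2)
lemma x_lt: "k < n \<Longrightarrow> x k \<noteq> zr" unfolding n_def using not_less_Least by blast
lemma x_ge: "n \<le> k \<Longrightarrow> x k = zr" using x_mono xn by blast
lemma n_pos: "0 < n" using x0 unz xn by (cases n) auto

lemma xk_act: "vp E \<sigma> t w \<Longrightarrow> x k \<cdot> path_elem (t,w) = zr \<or> x k \<cdot> path_elem (t,w) = x (k + length w)"
proof -
  assume v: "vp E \<sigma> t w"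
  have e1: "x k \<cdot> path_elem (t,w) = u \<cdot> kq_mult E \<sigma> (path_elem (s, arrs s \<alpha> k)) (path_elem (t,w))"
    unfolding x_def using ac_ac[OF uC pelem_carrier[OF vP] pelem_carrier[OF v]] .
  show ?thesis
  proof (cases "(\<sigma> \<alpha> ^^ k) s = t")
    case True
    then have "kq_mult E \<sigma> (path_elem (s, arrs s \<alpha> k)) (path_elem (t,w)) = (path_elem (s, arrs s \<alpha> k @ w) :: ('v,'k) kq)"
      using kq_mult_pelem[OF vP[of k] v] peP[of k] by simp
    moreover have "vp E \<sigma> s (arrs s \<alpha> k @ w)" using vP v True peP by (simp add: vp_append)
    ultimately show ?thesis using e1 Q3'[of s "arrs s \<alpha> k @ w"] by (simp add: arrs_len)
  next
    case False
    then have "kq_mult E \<sigma> (path_elem (s, arrs s \<alpha> k)) (path_elem (t,w)) = (kq_zero :: ('v,'k) kq)"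
      using kq_mult_pelem[OF vP[of k] v] peP[of k] by simp
    then show ?thesis using e1 ac_kq_zero[OF uC] by simp
  qed
qed

lemma ind: "vp E \<sigma> t w \<Longrightarrow> lcomb x (\<lambda>k. path_elem (t,w) (s, arrs s \<alpha> k)) n = u \<cdot> path_elem (t,w)"
proof -
  assume v: "vp E \<sigma> t w"
  show ?thesis
  proof (cases "t = s \<and> w = arrs s \<alpha> (length w)")
    case True
    have "(\<lambda>k. (path_elem (t,w) :: ('v,'k) kq) (s, arrs s \<alpha> k)) = (\<lambda>k. if k = length w then 1 else 0)"
    proof
      fix k show "(path_elem (t,w) :: ('v,'k) kq) (s, arrs s \<alpha> k) = (if k = length w then 1 else 0)"
        using True arrs_len[of s \<alpha> k] by (auto simp: path_elem_def)
    qed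
    then show ?thesis using lc_single[OF xC'] Q3[OF v] True x_ge by auto
  next
    case False
    have "\<forall>k<n. (path_elem (t,w) :: ('v,'k) kq) (s, arrs s \<alpha> k) = 0"
      using False arrs_len by (auto simp: path_elem_def)
    then show ?thesis using lc_zero[OF xC'] Q3[OF v] False by simp
  qed
qed

lemma formula: "f \<in> kq_carrier E \<sigma> \<Longrightarrow> u \<cdot> f = lcomb x (\<lambda>k. f (s, arrs s \<alpha> k)) n"
proof -
  assume f: "f \<in> kq_carrier E \<sigma>"
  show ?thesis
  proof (rule kq_induct[OF f, where Q="\<lambda>g. u \<cdot> g = lcomb x (\<lambda>k. g (s, arrs s \<alpha> k)) n"])
    show "u \<cdot> kq_zero = lcomb x (\<lambda>k. kq_zero (s, arrs s \<alpha> k)) n"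
      using ac_kq_zero[OF uC] lc_zero[OF xC'] by (simp add: kq_zero_def)
  next
    fix g t w c
    assume g: "g \<in> kq_carrier E \<sigma>" and IH: "u \<cdot> g = lcomb x (\<lambda>k. g (s, arrs s \<alpha> k)) n" and v: "vp E \<sigma> t w"
    have pc: "path_elem (t,w) \<in> kq_carrier E \<sigma>" using pelem_carrier[OF v] .
    have "u \<cdot> kq_add g (kq_smul c (path_elem (t, w))) = lcomb x (\<lambda>k. g (s, arrs s \<alpha> k)) n \<oplus> c \<odot> lcomb x (\<lambda>k. path_elem (t,w) (s, arrs s \<alpha> k)) n"
      using ac_add[OF uC g kq_smul_carrier[OF pc]] ac_smul[OF uC pc] IH ind[OF v] by simp
    also have "\<dots> = lcomb x (\<lambda>k. g (s, arrs s \<alpha> k)) n \<oplus> lcomb x (\<lambda>k. c * path_elem (t,w) (s, arrs s \<alpha> k)) n"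
      using lc_smul[OF xC'] by simp
    also have "\<dots> = lcomb x (\<lambda>k. (kq_add g (kq_smul c (path_elem (t, w)))) (s, arrs s \<alpha> k)) n"
      using lc_add[OF xC', symmetric] by (simp add: kq_add_def kq_smul_def)
    finally show "u \<cdot> kq_add g (kq_smul c (path_elem (t, w))) = lcomb x (\<lambda>k. (kq_add g (kq_smul c (path_elem (t, w)))) (s, arrs s \<alpha> k)) n" .
  qed
qed

lemma indep: "lcomb x c n = zr \<Longrightarrow> k < n \<Longrightarrow> c k = 0"
proof (rule ccontr)
  assume lz: "lcomb x c n = zr" and kn: "k < n" and ck: "c k \<noteq> 0"
  define j where "j = (LEAST k. k < n \<and> c k \<noteq> 0)"
  have j: "j < n" "c j \<noteq> 0" using LeastI[of "\<lambda>k. k < n \<and> c k \<noteq> 0" k] kn ck j_def by auto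
  have jlow: "\<forall>k<j. c k = 0"
  proof (intro allI impI)
    fix k assume kj: "k < j"
    then have "\<not> (k < n \<and> c k \<noteq> 0)" using not_less_Least[of k "\<lambda>k. k < n \<and> c k \<noteq> 0"] j_def by blast
    then show "c k = 0" using kj j(1) by simp
  qed
  define m where "m = n - 1 - j"
  define T where "T = (path_elem ((\<sigma> \<alpha> ^^ j) s, arrs ((\<sigma> \<alpha> ^^ j) s) \<alpha> m) :: ('v,'k) kq)"
  have vT: "vp E \<sigma> ((\<sigma> \<alpha> ^^ j) s) (arrs ((\<sigma> \<alpha> ^^ j) s) \<alpha> m)" using vP2 .
  have Tc: "T \<in> kq_carrier E \<sigma>" unfolding T_def using pelem_carrier[OF vT] .
  have yC: "\<forall>k. x k \<cdot> T \<in> C" using xC ac_C Tc by blast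
  have "lcomb (\<lambda>k. x k \<cdot> T) c n = zr" using lc_act[OF xC' Tc, of c n] lz ac_zero_left[OF Tc] by metis
  moreover have "\<forall>k. j < k \<and> k < n \<longrightarrow> x k \<cdot> T = zr"
  proof (intro allI impI)
    fix k assume "j < k \<and> k < n"
    then have "n \<le> k + length (arrs ((\<sigma> \<alpha> ^^ j) s) \<alpha> m)" unfolding arrs_len m_def by arith
    then show "x k \<cdot> T = zr" using xk_act[OF vT, of k] x_ge unfolding T_def by auto
  qed
  ultimately have "c j \<odot> (x j \<cdot> T) = zr" using lc_vanish[OF yC j(1) jlow] by simp
  moreover have "x j \<cdot> T = x (n - 1)" unfolding T_def using x_add[of j m] j by (simp add: m_def)
  ultimately have "x (n - 1) = zr" using sm_inj[OF xC j(2)] by simp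
  then show False using x_lt[of "n - 1"] n_pos by simp
qed


definition Sj :: "nat \<Rightarrow> 'm set" where "Sj j = {lcomb x c n | c. \<forall>k<j. c k = 0}"

lemma S_C: "Sj j \<subseteq> C" using lc_C[OF xC'] by (auto simp: Sj_def)

lemma S_zr: "zr \<in> Sj j"
proof -
  have "lcomb x (\<lambda>k. 0) n = zr" using lc_zero[OF xC'] by simp
  then show ?thesis unfolding Sj_def by force
qed

lemma S_add: "y \<in> Sj j \<Longrightarrow> y' \<in> Sj j \<Longrightarrow> y \<oplus> y' \<in> Sj j"
proof -
  assume "y \<in> Sj j" "y' \<in> Sj j"
  then obtain c d where cd: "y = lcomb x c n" "\<forall>k<j. c k = 0" "y' = lcomb x d n" "\<forall>k<j. d k = 0" by (auto simp: Sj_def)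
  then have "y \<oplus> y' = lcomb x (\<lambda>k. c k + d k) n" using lc_add[OF xC', of c d n] by simp
  moreover have "\<forall>k<j. c k + d k = 0" using cd by simp
  ultimately show ?thesis unfolding Sj_def by blast
qed

lemma S_smul: "y \<in> Sj j \<Longrightarrow> e \<odot> y \<in> Sj j"
proof -
  assume "y \<in> Sj j"
  then obtain c where cd: "y = lcomb x c n" "\<forall>k<j. c k = 0" by (auto simp: Sj_def)
  then have "e \<odot> y = lcomb x (\<lambda>k. e * c k) n" using lc_smul[OF xC', of e c n] by simp
  moreover have "\<forall>k<j. e * c k = 0" using cd by simp
  ultimately show ?thesis unfolding Sj_def by blast
qed

lemma S_mono: "j \<le> j' \<Longrightarrow> Sj j' \<subseteq> Sj j" by (auto simp: Sj_def)

lemma x_in_S: "j \<le> m \<Longrightarrow> x m \<in> Sj j"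
proof (cases "m < n")
  case True
  assume "j \<le> m"
  then have "lcomb x (\<lambda>k. if k = m then 1 else 0) n \<in> Sj j" unfolding Sj_def by force
  then show ?thesis using lc_single[OF xC', of m n] True by simp
next
  case False
  then show ?thesis using x_ge S_zr by simp
qed

lemma xk_f: "f \<in> kq_carrier E \<sigma> \<Longrightarrow> x k \<cdot> f \<in> Sj k"
proof -
  assume f: "f \<in> kq_carrier E \<sigma>"
  show ?thesis
  proof (rule kq_induct[OF f, where Q="\<lambda>g. x k \<cdot> g \<in> Sj k"])
    show "x k \<cdot> kq_zero \<in> Sj k" using ac_kq_zero[OF xC] S_zr by simp
  next
    fix g t w c
    assume g: "g \<in> kq_carrier E \<sigma>" and IH: "x k \<cdot> g \<in> Sj k" and v: "vp E \<sigma> t w"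
    have pc: "path_elem (t,w) \<in> kq_carrier E \<sigma>" using pelem_carrier[OF v] .
    have "x k \<cdot> path_elem (t,w) \<in> Sj k" using xk_act[OF v, of k] S_zr x_in_S[of k "k + length w"] by auto
    then show "x k \<cdot> kq_add g (kq_smul c (path_elem (t, w))) \<in> Sj k"
      using ac_add[OF xC g kq_smul_carrier[OF pc]] ac_smul[OF xC pc] IH S_add S_smul by simp
  qed
qed

lemma S_act: "y \<in> Sj j \<Longrightarrow> f \<in> kq_carrier E \<sigma> \<Longrightarrow> y \<cdot> f \<in> Sj j"
proof -
  assume y: "y \<in> Sj j" and f: "f \<in> kq_carrier E \<sigma>"
  then obtain c where c: "y = lcomb x c n" "\<forall>k<j. c k = 0" by (auto simp: Sj_def)
  have "\<forall>m. lcomb (\<lambda>k. x k \<cdot> f) c m \<in> Sj j"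
  proof
    fix m show "lcomb (\<lambda>k. x k \<cdot> f) c m \<in> Sj j"
    proof (induction m)
      case 0 then show ?case using S_zr by simp
    next
      case (Suc m)
      have "c m \<odot> (x m \<cdot> f) \<in> Sj j"
      proof (cases "m < j")
        case True then show ?thesis using c sm_zero_left[OF ac_C[OF xC f]] S_zr by simp
      next
        case False then show ?thesis using xk_f[OF f, of m] S_mono[of j m] S_smul by auto
      qed
      then show ?case using Suc S_add by simp
    qed
  qed
  then show ?thesis using c lc_act[OF xC' f] by simp
qed

lemma S_sub: "sub (Sj j)"
  unfolding submod_def using S_C S_zr S_add S_smul S_act by blast

lemma all_C: "C = Sj 0"
proof
  show "C \<subseteq> Sj 0"
  proof
    fix y assume "y \<in> C"
    then obtain f where "f \<in> kq_carrier E \<sigma>" "y = u \<cdot> f" using ug by (auto simp: gen_def)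
    then show "y \<in> Sj 0" using formula unfolding Sj_def by force
  qed
  show "Sj 0 \<subseteq> C" using S_C .
qed

lemma decomp: "y \<in> C \<Longrightarrow> \<exists>c0 z. z \<in> Sj 1 \<and> y = c0 \<odot> u \<oplus> z"
proof -
  assume "y \<in> C"
  then obtain c where c: "y = lcomb x c n" using all_C by (auto simp: Sj_def)
  have "y = c 0 \<odot> x 0 \<oplus> lcomb x (c(0:=0)) n" unfolding c by (rule lc_split0[OF xC' n_pos])
  moreover have "lcomb x (c(0:=0)) n \<in> Sj 1" unfolding Sj_def by force
  ultimately show ?thesis using x0 by metis
qed

lemma lc_eq_indep: "lcomb x c n = lcomb x d n \<Longrightarrow> k < n \<Longrightarrow> c k = d k"
proof -
  assume e: "lcomb x c n = lcomb x d n" and k: "k < n"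
  have "lcomb x c n \<oplus> (-1) \<odot> lcomb x d n = lcomb x c n \<oplus> lcomb x (\<lambda>k. (-1) * d k) n"
    using lc_smul[OF xC', of "-1" d n] by simp
  also have "\<dots> = lcomb x (\<lambda>k. c k + (-1) * d k) n"
    using lc_add[OF xC', of c "\<lambda>k. (-1) * d k" n] by simp
  finally have "lcomb x (\<lambda>k. c k + (-1) * d k) n = lcomb x c n \<oplus> (-1) \<odot> lcomb x d n" by simp
  also have "\<dots> = zr" using e sm_neg lc_C[OF xC'] by simp
  finally have "c k + (-1) * d k = 0" using indep k by blast
  then show ?thesis by simp
qed

lemma u_notin: "u \<notin> Sj 1"
proof
  assume "u \<in> Sj 1"
  then obtain c where c: "u = lcomb x c n" "c 0 = 0" by (auto simp: Sj_def)
  have "u = lcomb x (\<lambda>k. if k = 0 then 1 else 0) n" using lc_single[OF xC', of 0 n] n_pos x0 by simp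
  then have "(1::'k) = c 0" using lc_eq_indep[of "\<lambda>k. if k = 0 then 1 else 0" c 0] c n_pos by simp
  then show False using c by simp
qed

lemma S1_max: "maximal_submod E \<sigma> M (Sj 1)"
  unfolding maximal_submod_def
proof (intro conjI allI impI)
  show "sub (Sj 1)" using S_sub .
  show "Sj 1 \<noteq> C" using u_notin uC by blast
  fix N' assume N': "sub N' \<and> Sj 1 \<subseteq> N'"
  show "N' = Sj 1 \<or> N' = C"
  proof (cases "N' = Sj 1")
    case False
    then obtain y where y: "y \<in> N'" "y \<notin> Sj 1" using N' by blast
    have yC: "y \<in> C" using y N' by (auto simp: submod_def)
    obtain c0 z where cz: "z \<in> Sj 1" "y = c0 \<odot> u \<oplus> z" using decomp[OF yC] by blast
    have zC: "z \<in> C" using cz S_C by blast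
    have c0: "c0 \<noteq> 0"
    proof
      assume "c0 = 0"
      then have "y = z" using cz sm_zero_left[OF uC] z_ad zC by simp
      then show False using y cz by simp
    qed
    have "y \<oplus> (-1) \<odot> z = c0 \<odot> u \<oplus> (z \<oplus> (-1) \<odot> z)" using cz ad_assoc sm_C uC zC by simp
    also have "\<dots> = c0 \<odot> u" using sm_neg[OF zC] ad_z sm_C[OF uC] by simp
    finally have "c0 \<odot> u \<in> N'" using N' y cz(1) by (metis (no_types, lifting) submod_def subsetD)
    then have "inverse c0 \<odot> (c0 \<odot> u) \<in> N'" using N' by (simp add: submod_def)
    then have "u \<in> N'" using sm_mult[OF uC, of "inverse c0" c0] c0 sm_one[OF uC] by simp
    then have "C \<subseteq> N'" using gen_le N' ug by blast
    then show ?thesis using N' by (auto simp: submod_def)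
  qed simp
qed

lemma rad_eq: "rad E \<sigma> M = Sj 1"
proof -
  have "{N. maximal_submod E \<sigma> M N} = {Sj 1}"
  proof (intro set_eqI iffI)
    fix N assume "N \<in> {N. maximal_submod E \<sigma> M N}"
    then have N: "maximal_submod E \<sigma> M N" by simp
    have subN: "sub N" using N by (simp add: maximal_submod_def)
    have m1: "\<forall>N'. sub N' \<and> Sj 1 \<subseteq> N' \<longrightarrow> N' = Sj 1 \<or> N' = C" "Sj 1 \<noteq> C"
      using S1_max by (auto simp: maximal_submod_def)
    have mN: "\<forall>N'. sub N' \<and> N \<subseteq> N' \<longrightarrow> N' = N \<or> N' = C" "N \<noteq> C"
      using N by (auto simp: maximal_submod_def)
    from chain[OF subN S_sub] have "N = Sj 1"
    proof
      assume "N \<subseteq> Sj 1" then show ?thesis using mN S_sub m1(2) by blast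
    next
      assume "Sj 1 \<subseteq> N" then show ?thesis using m1 subN mN(2) by blast
    qed
    then show "N \<in> {Sj 1}" by simp
  next
    fix N assume "N \<in> {Sj 1}" then show "N \<in> {N. maximal_submod E \<sigma> M N}" using S1_max by simp
  qed
  then show ?thesis using S_C by (auto simp: rad_def)
qed

lemma soc_line: "Sj (n - 1) = {c \<odot> x (n - 1) | c. True}"
proof
  show "Sj (n - 1) \<subseteq> {c \<odot> x (n - 1) | c. True}"
  proof
    fix y assume "y \<in> Sj (n - 1)"
    then obtain c where c: "y = lcomb x c n" "\<forall>k<n-1. c k = 0" by (auto simp: Sj_def)
    have "\<forall>k. n - 1 < k \<and> k < n \<longrightarrow> x k = zr" by auto
    then have "lcomb x c n = c (n-1) \<odot> x (n-1)" using lc_vanish[OF xC', of "n-1" n c] c n_pos by simp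
    then show "y \<in> {c \<odot> x (n - 1) | c. True}" using c by blast
  qed
  show "{c \<odot> x (n - 1) | c. True} \<subseteq> Sj (n - 1)"
  proof
    fix y assume "y \<in> {c \<odot> x (n - 1) | c. True}"
    then obtain e where "y = e \<odot> x (n - 1)" by blast
    then show "y \<in> Sj (n - 1)" using x_in_S[of "n-1" "n-1"] S_smul by simp
  qed
qed

lemma soc_simple: "simple_mod E \<sigma> (restr M (Sj (n - 1)))"
  using simple_line[OF xC x_lt[of "n-1"] soc_line] n_pos by simp

lemma soc_eq: "soc E \<sigma> M = Sj (n - 1)"
proof -
  let ?F = "{N. sub N \<and> (\<forall>S. sub S \<and> simple_mod E \<sigma> (restr M S) \<longrightarrow> S \<subseteq> N)}"
  have inF0: "sub (Sj (n - 1)) \<and> (\<forall>S. sub S \<and> simple_mod E \<sigma> (restr M S) \<longrightarrow> S \<subseteq> Sj (n - 1))"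
  proof (intro conjI allI impI)
    show "sub (Sj (n-1))" using S_sub .
    fix S assume S: "sub S \<and> simple_mod E \<sigma> (restr M S)"
    from chain[OF conjunct1[OF S] S_sub] show "S \<subseteq> Sj (n-1)"
    proof
      assume L: "Sj (n - 1) \<subseteq> S"
      have "submod E \<sigma> (restr M S) (Sj (n-1))" using S_sub L by (auto simp: submod_def restr_def)
      then have "Sj (n-1) = {zr} \<or> Sj (n-1) = S" using S by (auto simp: simple_mod_def restr_def)
      moreover have "x (n-1) \<in> Sj (n-1)" using x_in_S by simp
      ultimately show ?thesis using x_lt[of "n-1"] n_pos by auto
    qed simp
  qed
  then have inF: "Sj (n - 1) \<in> ?F" by simp
  have "\<forall>N\<in>?F. Sj (n - 1) \<subseteq> N" using S_sub soc_simple by blast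
  then show ?thesis unfolding soc_def using inF by blast
qed

lemma soc_ee: "x (n - 1) \<cdot> ee ((\<sigma> \<alpha> ^^ (n - 1)) s) = x (n - 1)"
proof -
  define t where "t = (\<sigma> \<alpha> ^^ (n - 1)) s"
  have tE: "t \<in> E" using sigpow_in sE aE t_def by blast
  have vt: "vp E \<sigma> t []" using tE by simp
  have e1: "x (n - 1) \<cdot> ee t = u \<cdot> kq_mult E \<sigma> (path_elem (s, arrs s \<alpha> (n-1))) (path_elem (t, []))"
    unfolding x_def ee_def by (rule ac_ac[OF uC pelem_carrier[OF vP] pelem_carrier[OF vt]])
  have pt: "pe \<sigma> s (arrs s \<alpha> (n-1)) = t" using peP t_def by simp
  have km: "kq_mult E \<sigma> (path_elem (s, arrs s \<alpha> (n-1))) (path_elem (t, [])) =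
       (if pe \<sigma> s (arrs s \<alpha> (n-1)) = t then path_elem (s, arrs s \<alpha> (n-1) @ []) else (kq_zero :: ('v,'k) kq))"
    by (rule kq_mult_pelem[OF vP[of "n-1"] vt])
  have "kq_mult E \<sigma> (path_elem (s, arrs s \<alpha> (n-1))) (path_elem (t, [])) = (path_elem (s, arrs s \<alpha> (n-1)) :: ('v,'k) kq)"
    unfolding km pt by simp
  then have "x (n - 1) \<cdot> ee t = x (n - 1)" using e1 by (simp add: x_def)
  then show ?thesis by (simp add: t_def)
qed

end



context kqm begin

definition cs :: "'m set \<Rightarrow> 'm \<Rightarrow> 'm set" where "cs N y = coset M N y"

lemma neg_in: "sub N \<Longrightarrow> m \<in> N \<Longrightarrow> (-1) \<odot> m \<in> N" by (simp add: submod_def)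

lemma coset_shift: "sub N \<Longrightarrow> z \<in> C \<Longrightarrow> m' \<in> N \<Longrightarrow> coset M N (z \<oplus> m') = coset M N z"
proof -
  assume N: "sub N" and z: "z \<in> C" and m': "m' \<in> N"
  have NC: "N \<subseteq> C" using N by (simp add: submod_def)
  have m'C: "m' \<in> C" using NC m' by blast
  show ?thesis
  proof
    show "coset M N (z \<oplus> m') \<subseteq> coset M N z"
    proof
      fix w assume "w \<in> coset M N (z \<oplus> m')"
      then obtain m where m: "m \<in> N" "w = (z \<oplus> m') \<oplus> m" by (auto simp: coset_def)
      then have "w = z \<oplus> (m' \<oplus> m)" using ad_assoc z m'C NC by blast
      moreover have "m' \<oplus> m \<in> N" using N m' m by (simp add: submod_def)
      ultimately show "w \<in> coset M N z" by (auto simp: coset_def)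
    qed
    show "coset M N z \<subseteq> coset M N (z \<oplus> m')"
    proof
      fix w assume "w \<in> coset M N z"
      then obtain m where m: "m \<in> N" "w = z \<oplus> m" by (auto simp: coset_def)
      have mC: "m \<in> C" using m NC by blast
      have nm: "(-1) \<odot> m' \<in> N" using neg_in N m' by blast
      have nmC: "(-1) \<odot> m' \<in> C" using nm NC by blast
      have "(z \<oplus> m') \<oplus> ((-1) \<odot> m' \<oplus> m) = z \<oplus> ((m' \<oplus> (-1) \<odot> m') \<oplus> m)"
        using ad_assoc z m'C nmC mC ad_C by metis
      also have "\<dots> = w" using sm_neg[OF m'C] z_ad mC m by simp
      finally have "w = (z \<oplus> m') \<oplus> ((-1) \<odot> m' \<oplus> m)" by simp
      moreover have "(-1) \<odot> m' \<oplus> m \<in> N" using N nm m by (simp add: submod_def)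
      ultimately show "w \<in> coset M N (z \<oplus> m')" by (auto simp: coset_def)
    qed
  qed
qed

lemma coset_self: "sub N \<Longrightarrow> y \<in> C \<Longrightarrow> y \<in> coset M N y"
proof -
  assume N: "sub N" and y: "y \<in> C"
  have "zr \<in> N" using N by (simp add: submod_def)
  moreover have "y = y \<oplus> zr" using ad_z[OF y] by simp
  ultimately show ?thesis unfolding coset_def by blast
qed

lemma coset_zr: "sub N \<Longrightarrow> coset M N zr = N"
proof -
  assume N: "sub N"
  then have NC: "N \<subseteq> C" by (simp add: submod_def)
  show ?thesis
  proof
    show "coset M N zr \<subseteq> N" unfolding coset_def using z_ad NC by auto
    show "N \<subseteq> coset M N zr"
    proof
      fix m assume m: "m \<in> N"
      then have "m = zr \<oplus> m" using z_ad NC by auto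
      then show "m \<in> coset M N zr" unfolding coset_def using m by blast
    qed
  qed
qed

lemma coset_in_N: "sub N \<Longrightarrow> m \<in> N \<Longrightarrow> coset M N m = N"
proof -
  assume N: "sub N" and m: "m \<in> N"
  have "m \<in> C" using N m by (auto simp: submod_def)
  have "coset M N (zr \<oplus> m) = coset M N zr" by (rule coset_shift[OF N z_C m])
  then show ?thesis using z_ad \<open>m \<in> C\<close> coset_zr[OF N] by simp
qed

lemma coset_eq: "sub N \<Longrightarrow> y \<in> C \<Longrightarrow> coset M N y = coset M N z \<Longrightarrow> \<exists>m\<in>N. y = z \<oplus> m"
proof -
  assume N: "sub N" and y: "y \<in> C" and e: "coset M N y = coset M N z"
  have "y \<in> coset M N z" using coset_self[OF N y] e by simp
  then show ?thesis by (auto simp: coset_def)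
qed

lemma q_act: "sub N \<Longrightarrow> y \<in> C \<Longrightarrow> f \<in> kq_carrier E \<sigma> \<Longrightarrow> mact (quot M N) (coset M N y) f = coset M N (y \<cdot> f)"
proof -
  assume N: "sub N" and y: "y \<in> C" and f: "f \<in> kq_carrier E \<sigma>"
  have NC: "N \<subseteq> C" using N by (simp add: submod_def)
  have each: "coset M N (w \<cdot> f) = coset M N (y \<cdot> f)" if w: "w \<in> coset M N y" for w
  proof -
    obtain m where m: "m \<in> N" "w = y \<oplus> m" using w by (auto simp: coset_def)
    have "w \<cdot> f = y \<cdot> f \<oplus> m \<cdot> f" using ac_ad y m NC f by blast
    moreover have "m \<cdot> f \<in> N" using N m f by (simp add: submod_def)
    ultimately show ?thesis using coset_shift[OF N ac_C[OF y f]] by simp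
  qed
  have "mact (quot M N) (coset M N y) f = (\<Union>w\<in>coset M N y. coset M N (w \<cdot> f))" by (simp add: quot_def)
  also have "\<dots> = coset M N (y \<cdot> f)" using each coset_self[OF N y] by blast
  finally show ?thesis .
qed

lemma q_smul: "sub N \<Longrightarrow> y \<in> C \<Longrightarrow> msmul (quot M N) c (coset M N y) = coset M N (c \<odot> y)"
proof -
  assume N: "sub N" and y: "y \<in> C"
  have NC: "N \<subseteq> C" using N by (simp add: submod_def)
  have each: "coset M N (c \<odot> w) = coset M N (c \<odot> y)" if w: "w \<in> coset M N y" for w
  proof -
    obtain m where m: "m \<in> N" "w = y \<oplus> m" using w by (auto simp: coset_def)
    have "c \<odot> w = c \<odot> y \<oplus> c \<odot> m" using sm_ad y m NC by blast
    moreover have "c \<odot> m \<in> N" using N m by (simp add: submod_def)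
    ultimately show ?thesis using coset_shift[OF N sm_C[OF y]] by simp
  qed
  have "msmul (quot M N) c (coset M N y) = (\<Union>w\<in>coset M N y. coset M N (c \<odot> w))" by (simp add: quot_def)
  also have "\<dots> = coset M N (c \<odot> y)" using each coset_self[OF N y] by blast
  finally show ?thesis .
qed

lemma q_facts: "sub N \<Longrightarrow> mzero (quot M N) \<in> carr (quot M N) \<and> (\<forall>Y\<in>carr (quot M N). msmul (quot M N) 0 Y = mzero (quot M N))"
proof -
  assume N: "sub N"
  have "mzero (quot M N) = coset M N zr" using coset_zr[OF N] by (simp add: quot_def)
  then have "mzero (quot M N) \<in> carr (quot M N)" using z_C by (simp add: quot_def)
  moreover have "\<forall>Y\<in>carr (quot M N). msmul (quot M N) 0 Y = mzero (quot M N)"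
  proof
    fix Y assume "Y \<in> carr (quot M N)"
    then obtain y where y: "y \<in> C" "Y = coset M N y" by (auto simp: quot_def)
    then show "msmul (quot M N) 0 Y = mzero (quot M N)"
      using q_smul[OF N y(1)] sm_zero_left[OF y(1)] coset_zr[OF N] by (simp add: quot_def)
  qed
  ultimately show ?thesis by blast
qed

end


definition edgeA :: "('m,'v,'k::field) kqmod \<Rightarrow> 'v set \<Rightarrow> bool" where
  "edgeA T s \<longleftrightarrow> (\<exists>D\<in>carr T. D \<noteq> mzero T \<and> mact T D (path_elem (s,[])) = D) \<and> mzero T \<in> carr T \<and> msmul T 0 (mzero T) = mzero T"

definition edgeB :: "'v set set \<Rightarrow> ('m,'v,'k::field) kqmod \<Rightarrow> 'v set \<Rightarrow> bool" where
  "edgeB E T s \<longleftrightarrow> (\<forall>Y\<in>carr T. msmul T 0 Y = mzero T) \<and>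
      (\<forall>t\<in>E. t \<noteq> s \<longrightarrow> (\<forall>Y\<in>carr T. mact T Y (path_elem (t,[])) = Y \<longrightarrow> Y = mzero T))"

lemma iso_edge:
  fixes A :: "('a,'v,'k::field) kqmod" and B :: "('b,'v,'k) kqmod"
  assumes iso: "mod_iso E \<sigma> A B" and e: "(path_elem (s,[]) :: ('v,'k) kq) \<in> kq_carrier E \<sigma>" and sE: "s \<in> E"
    and a: "edgeA A s" and b: "edgeB E B s'" and ss: "s \<noteq> s'"
  shows False
proof -
  obtain h where h: "mod_hom E \<sigma> A B h" "bij_betw h (carr A) (carr B)" using iso by (auto simp: mod_iso_def)
  obtain D where D: "D \<in> carr A" "D \<noteq> mzero A" "mact A D (path_elem (s,[])) = D" using a by (auto simp: edgeA_def)
  have z: "mzero A \<in> carr A" "msmul A 0 (mzero A) = mzero A" using a by (auto simp: edgeA_def)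
  have hz: "h (mzero A) = mzero B"
  proof -
    have "h (mzero A) = h (msmul A 0 (mzero A))" using z by simp
    also have "\<dots> = msmul B 0 (h (mzero A))"
    proof -
      have "\<forall>c. \<forall>x\<in>carr A. h (msmul A c x) = msmul B c (h x)" using h(1) by (simp add: mod_hom_def)
      then show ?thesis using z(1) by blast
    qed
    also have "\<dots> = mzero B"
    proof -
      have "h (mzero A) \<in> carr B" using h(2) z(1) bij_betwE by blast
      moreover have "\<forall>Y\<in>carr B. msmul B 0 Y = mzero B" using b by (simp add: edgeB_def)
      ultimately show ?thesis by blast
    qed
    finally show ?thesis .
  qed
  have hD: "h D \<in> carr B" using h(2) D bij_betwE by blast
  have "h D = h (mact A D (path_elem (s,[])))" using D by simp
  also have "\<dots> = mact B (h D) (path_elem (s,[]))"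
  proof -
    have "\<forall>x\<in>carr A. \<forall>f\<in>kq_carrier E \<sigma>. h (mact A x f) = mact B (h x) f" using h(1) by (simp add: mod_hom_def)
    then show ?thesis using D(1) e by blast
  qed
  finally have hh: "mact B (h D) (path_elem (s,[])) = h D" by simp
  have "\<forall>t\<in>E. t \<noteq> s' \<longrightarrow> (\<forall>Y\<in>carr B. mact B Y (path_elem (t,[])) = Y \<longrightarrow> Y = mzero B)"
    using b by (simp add: edgeB_def)
  then have "h D = mzero B" using hh hD ss sE by blast
  then have "h D = h (mzero A)" using hz by simp
  then have "D = mzero A" using h(2) D z by (meson bij_betw_def inj_onD)
  then show False using D by simp
qed

context bg begin

lemma iso_build:
  fixes L :: "('m,'v,'k::field) kqmod" and L' :: "('n,'v,'k) kqmod"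
  assumes kL: "kq_module E \<sigma> L" and kL': "kq_module E \<sigma> L'"
    and uL: "u \<in> carr L" and gL: "\<forall>y\<in>carr L. \<exists>f\<in>kq_carrier E \<sigma>. y = mact L u f"
    and uL': "u' \<in> carr L'" and gL': "\<forall>y\<in>carr L'. \<exists>f\<in>kq_carrier E \<sigma>. y = mact L' u' f"
    and aL: "\<forall>f\<in>kq_carrier E \<sigma>. \<forall>g\<in>kq_carrier E \<sigma>. (mact L u f = mact L u g) = P f g"
    and aL': "\<forall>f\<in>kq_carrier E \<sigma>. \<forall>g\<in>kq_carrier E \<sigma>. (mact L' u' f = mact L' u' g) = P f g"
  shows "mod_iso E \<sigma> L L'"
proof -
  interpret A: kqm V E \<sigma> L by unfold_locales (rule kL)
  interpret B: kqm V E \<sigma> L' by unfold_locales (rule kL')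
  define h where "h y = mact L' u' (SOME f. f \<in> kq_carrier E \<sigma> \<and> y = mact L u f)" for y
  have key: "h (mact L u f) = mact L' u' f" if f: "f \<in> kq_carrier E \<sigma>" for f
  proof -
    have "\<exists>g. g \<in> kq_carrier E \<sigma> \<and> mact L u f = mact L u g" using f by blast
    then have sg: "(SOME g. g \<in> kq_carrier E \<sigma> \<and> mact L u f = mact L u g) \<in> kq_carrier E \<sigma> \<and>
        mact L u f = mact L u (SOME g. g \<in> kq_carrier E \<sigma> \<and> mact L u f = mact L u g)" by (rule someI_ex)
    then have "P f (SOME g. g \<in> kq_carrier E \<sigma> \<and> mact L u f = mact L u g)" using aL f by blast
    then have "mact L' u' f = mact L' u' (SOME g. g \<in> kq_carrier E \<sigma> \<and> mact L u f = mact L u g)" using aL' f sg by blast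
    then show ?thesis unfolding h_def by simp
  qed
  have hom: "mod_hom E \<sigma> L L' h"
    unfolding mod_hom_def
  proof (intro conjI ballI allI)
    show "h ` carr L \<subseteq> carr L'"
    proof
      fix z assume "z \<in> h ` carr L"
      then obtain y where y: "y \<in> carr L" "z = h y" by blast
      then obtain f where f: "f \<in> kq_carrier E \<sigma>" "y = mact L u f" using gL by blast
      then show "z \<in> carr L'" using key y B.ac_C uL' by simp
    qed
  next
    fix y1 y2 assume y: "y1 \<in> carr L" "y2 \<in> carr L"
    obtain f1 where f1: "f1 \<in> kq_carrier E \<sigma>" "y1 = mact L u f1" using gL y by blast
    obtain f2 where f2: "f2 \<in> kq_carrier E \<sigma>" "y2 = mact L u f2" using gL y by blast
    have "madd L y1 y2 = mact L u (kq_add f1 f2)" using A.ac_add[OF uL f1(1) f2(1)] f1 f2 by simp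
    then have "h (madd L y1 y2) = mact L' u' (kq_add f1 f2)" using key[OF kq_add_carrier[OF f1(1) f2(1)]] by simp
    also have "\<dots> = madd L' (h y1) (h y2)" using B.ac_add[OF uL' f1(1) f2(1)] key f1 f2 by simp
    finally show "h (madd L y1 y2) = madd L' (h y1) (h y2)" .
  next
    fix c y assume y: "y \<in> carr L"
    obtain f where f: "f \<in> kq_carrier E \<sigma>" "y = mact L u f" using gL y by blast
    have "msmul L c y = mact L u (kq_smul c f)" using A.ac_smul[OF uL f(1)] f by simp
    then have "h (msmul L c y) = mact L' u' (kq_smul c f)" using key[OF kq_smul_carrier[OF f(1)]] by simp
    also have "\<dots> = msmul L' c (h y)" using B.ac_smul[OF uL' f(1)] key f by simp
    finally show "h (msmul L c y) = msmul L' c (h y)" .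
  next
    fix y and g :: "('v,'k) kq" assume y: "y \<in> carr L" and g: "g \<in> kq_carrier E \<sigma>"
    obtain f where f: "f \<in> kq_carrier E \<sigma>" "y = mact L u f" using gL y by blast
    have "mact L y g = mact L u (kq_mult E \<sigma> f g)" using A.ac_ac[OF uL f(1) g] f by simp
    then have "h (mact L y g) = mact L' u' (kq_mult E \<sigma> f g)" using key[OF kq_mult_carrier[OF f(1) g]] by simp
    also have "\<dots> = mact L' (h y) g" using B.ac_ac[OF uL' f(1) g] key f by simp
    finally show "h (mact L y g) = mact L' (h y) g" .
  qed
  have inj: "inj_on h (carr L)"
  proof
    fix y1 y2 assume y: "y1 \<in> carr L" "y2 \<in> carr L" and e: "h y1 = h y2"
    obtain f1 where f1: "f1 \<in> kq_carrier E \<sigma>" "y1 = mact L u f1" using gL y by blast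
    obtain f2 where f2: "f2 \<in> kq_carrier E \<sigma>" "y2 = mact L u f2" using gL y by blast
    have "mact L' u' f1 = mact L' u' f2" using e key f1 f2 by simp
    then have "P f1 f2" using aL' f1 f2 by blast
    then show "y1 = y2" using aL f1 f2 by blast
  qed
  have "h ` carr L = carr L'"
  proof
    show "h ` carr L \<subseteq> carr L'" using hom by (simp add: mod_hom_def)
    show "carr L' \<subseteq> h ` carr L"
    proof
      fix z assume "z \<in> carr L'"
      then obtain f where f: "f \<in> kq_carrier E \<sigma>" "z = mact L' u' f" using gL' by blast
      then have "z = h (mact L u f)" using key by simp
      moreover have "mact L u f \<in> carr L" using A.ac_C uL f by blast
      ultimately show "z \<in> h ` carr L" by blast
    qed
  qed
  then show ?thesis using hom inj by (auto simp: mod_iso_def bij_betw_def)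
qed

end


context ustr begin

lemma top_eq: "top_mod E \<sigma> M = quot M (Sj 1)" by (simp add: top_mod_def rad_eq)

lemma topA: "edgeA (top_mod E \<sigma> M) s"
proof -
  let ?N = "Sj 1"
  have N: "sub ?N" using S_sub .
  have D: "coset M ?N u \<in> carr (quot M ?N)" using uC by (simp add: quot_def)
  have Dz: "coset M ?N u \<noteq> mzero (quot M ?N)"
  proof
    assume "coset M ?N u = mzero (quot M ?N)"
    then have "coset M ?N u = coset M ?N zr" using coset_zr[OF N] by (simp add: quot_def)
    then obtain m where m: "m \<in> ?N" "u = zr \<oplus> m" using coset_eq[OF N uC] by blast
    have "m \<in> C" using m(1) S_C by blast
    then have "zr \<oplus> m = m" using z_ad by blast
    then have "u = m" using m(2) by simp
    then show False using m(1) u_notin by simp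
  qed
  have De: "mact (quot M ?N) (coset M ?N u) (path_elem (s,[])) = coset M ?N u"
    using q_act[OF N uC ee_carrier[OF sE]] ue by (simp add: ee_def)
  show ?thesis unfolding edgeA_def top_eq using D Dz De q_facts[OF N] by blast
qed

lemma topB: "edgeB E (top_mod E \<sigma> M) s"
proof -
  let ?N = "Sj 1"
  have N: "sub ?N" using S_sub .
  have "\<forall>Y\<in>carr (quot M ?N). mact (quot M ?N) Y (path_elem (t,[])) = Y \<longrightarrow> Y = mzero (quot M ?N)"
    if t: "t \<in> E" "t \<noteq> s" for t
  proof (intro ballI impI)
    fix Y assume Y: "Y \<in> carr (quot M ?N)" and e: "mact (quot M ?N) Y (path_elem (t,[])) = Y"
    then obtain y where y: "y \<in> C" "Y = coset M ?N y" by (auto simp: quot_def)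
    obtain c0 z where cz: "z \<in> ?N" "y = c0 \<odot> u \<oplus> z" using decomp[OF y(1)] by blast
    have zC: "z \<in> C" using cz S_C by blast
    have et: "(path_elem (t,[]) :: ('v,'k) kq) \<in> kq_carrier E \<sigma>" using ee_carrier[OF t(1)] by (simp add: ee_def)
    have ut: "u \<cdot> path_elem (t,[]) = zr" using ee_act[OF uC sE ue, of t "[]"] t by simp
    have "y \<cdot> path_elem (t,[]) = c0 \<odot> (u \<cdot> path_elem (t,[])) \<oplus> z \<cdot> path_elem (t,[])"
      using cz ac_ad[OF sm_C[OF uC] zC et] sm_ac[OF uC et] by simp
    also have "\<dots> = z \<cdot> path_elem (t,[])" using ut sm_zero_right z_ad ac_C[OF zC et] by simp
    finally have "y \<cdot> path_elem (t,[]) \<in> ?N" using S_act[OF cz(1) et] by simp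
    then have "coset M ?N (y \<cdot> path_elem (t,[])) = ?N" using coset_in_N[OF N] by blast
    moreover have "mact (quot M ?N) Y (path_elem (t,[])) = coset M ?N (y \<cdot> path_elem (t,[]))"
      using q_act[OF N y(1) et] y by simp
    ultimately show "Y = mzero (quot M ?N)" using e by (simp add: quot_def)
  qed
  then show ?thesis unfolding edgeB_def top_eq using q_facts[OF N] by blast
qed

lemma soc_mod_eq: "soc_mod E \<sigma> M = restr M (Sj (n - 1))" by (simp add: soc_mod_def soc_eq)

lemma socA: "edgeA (soc_mod E \<sigma> M) ((\<sigma> \<alpha> ^^ (n - 1)) s)"
proof -
  have "x (n - 1) \<in> Sj (n - 1)" using x_in_S by simp
  moreover have "x (n - 1) \<noteq> zr" using x_lt n_pos by simp
  moreover have "x (n - 1) \<cdot> path_elem ((\<sigma> \<alpha> ^^ (n - 1)) s, []) = x (n - 1)" using soc_ee by (simp add: ee_def)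
  ultimately show ?thesis unfolding edgeA_def soc_mod_eq using S_zr sm_zero_right by (auto simp: restr_def)
qed

lemma socB: "edgeB E (soc_mod E \<sigma> M) ((\<sigma> \<alpha> ^^ (n - 1)) s)"
proof -
  define t0 where "t0 = (\<sigma> \<alpha> ^^ (n - 1)) s"
  have t0E: "t0 \<in> E" using sigpow_in sE aE t0_def by blast
  have xe: "x (n - 1) \<cdot> ee t0 = x (n - 1)" using soc_ee t0_def by simp
  have A1: "\<forall>Y\<in>Sj (n - 1). 0 \<odot> Y = zr" using sm_zero_left S_C by blast
  have A2: "\<forall>t\<in>E. t \<noteq> t0 \<longrightarrow> (\<forall>Y\<in>Sj (n - 1). Y \<cdot> path_elem (t,[]) = Y \<longrightarrow> Y = zr)"
  proof (intro ballI impI)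
    fix t Y assume t: "t \<in> E" "t \<noteq> t0" and Y: "Y \<in> Sj (n - 1)" and e: "Y \<cdot> path_elem (t,[]) = Y"
    obtain c where c: "Y = c \<odot> x (n - 1)" using Y soc_line by blast
    have et: "(path_elem (t,[]) :: ('v,'k) kq) \<in> kq_carrier E \<sigma>" using ee_carrier[OF t(1)] by (simp add: ee_def)
    have "x (n - 1) \<cdot> path_elem (t,[]) = zr" using ee_act[OF xC t0E xe, of t "[]"] t by simp
    then have "Y \<cdot> path_elem (t,[]) = zr" using c sm_ac[OF xC et] sm_zero_right by simp
    then show "Y = zr" using e by simp
  qed
  show ?thesis unfolding edgeB_def soc_mod_eq using A1 A2 t0_def by (simp add: restr_def)
qed

lemma ann: "f \<in> kq_carrier E \<sigma> \<Longrightarrow> g \<in> kq_carrier E \<sigma> \<Longrightarrow>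
   (u \<cdot> f = u \<cdot> g) = (\<forall>k<n. f (s, arrs s \<alpha> k) = g (s, arrs s \<alpha> k))"
proof -
  assume f: "f \<in> kq_carrier E \<sigma>" and g: "g \<in> kq_carrier E \<sigma>"
  show ?thesis
  proof
    assume "u \<cdot> f = u \<cdot> g"
    then have e: "lcomb x (\<lambda>k. f (s, arrs s \<alpha> k)) n = lcomb x (\<lambda>k. g (s, arrs s \<alpha> k)) n"
      using formula[OF f] formula[OF g] by simp
    show "\<forall>k<n. f (s, arrs s \<alpha> k) = g (s, arrs s \<alpha> k)"
    proof (intro allI impI)
      fix k assume "k < n"
      then show "f (s, arrs s \<alpha> k) = g (s, arrs s \<alpha> k)" using lc_eq_indep[OF e] by blast
    qed
  next
    assume "\<forall>k<n. f (s, arrs s \<alpha> k) = g (s, arrs s \<alpha> k)"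
    then show "u \<cdot> f = u \<cdot> g" using formula[OF f] formula[OF g] lc_cong[of n "\<lambda>k. f (s, arrs s \<alpha> k)" "\<lambda>k. g (s, arrs s \<alpha> k)" x] by simp
  qed
qed

lemma n_ge2: "\<not> simple_mod E \<sigma> M \<Longrightarrow> 2 \<le> n"
proof (rule ccontr)
  assume ns: "\<not> simple_mod E \<sigma> M" and "\<not> 2 \<le> n"
  then have n1: "n = 1" using n_pos by simp
  have "C = Sj (n - 1)" using all_C n1 by simp
  then have "simple_mod E \<sigma> (restr M C)" using soc_simple by simp
  then show False using ns restr_C by simp
qed

lemma gen_all: "\<forall>y\<in>C. \<exists>f\<in>kq_carrier E \<sigma>. y = u \<cdot> f" using ug by (auto simp: gen_def)

end


context unis begin

lemma struct:
  assumes ns: "\<not> simple_mod E \<sigma> M"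
  shows "\<exists>s \<alpha> n u. s \<in> E \<and> (s,\<alpha>) \<in> qarrows E \<and> 2 \<le> n \<and> n \<le> Suc (val E \<alpha>)
     \<and> (\<forall>\<beta>. card E \<noteq> 1 \<and> (s,\<beta>) \<in> qarrows E \<and> \<beta> \<noteq> \<alpha> \<longrightarrow> n \<le> val E \<alpha>)
     \<and> u \<in> C \<and> (\<forall>y\<in>C. \<exists>f\<in>kq_carrier E \<sigma>. y = u \<cdot> f)
     \<and> (\<forall>f\<in>kq_carrier E \<sigma>. \<forall>g\<in>kq_carrier E \<sigma>. (u \<cdot> f = u \<cdot> g) = (\<forall>k<n. f (s, arrs s \<alpha> k) = g (s, arrs s \<alpha> k)))
     \<and> edgeA (top_mod E \<sigma> M) s \<and> edgeB E (top_mod E \<sigma> M) s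
     \<and> edgeA (soc_mod E \<sigma> M) ((\<sigma> \<alpha> ^^ (n - 1)) s) \<and> edgeB E (soc_mod E \<sigma> M) ((\<sigma> \<alpha> ^^ (n - 1)) s)"
proof -
  obtain u s where us: "s \<in> E" "u \<in> C" "u \<cdot> ee s = u" "gen u = C" "u \<noteq> zr" using gen_exists by blast
  interpret G: ugen V E \<sigma> M u s by unfold_locales (use us in auto)
  obtain \<alpha> where a: "(s,\<alpha>) \<in> qarrows E" "u \<cdot> path_elem (s,[(s,\<alpha>)]) \<noteq> zr"
    using G.no_arrow_simple ns by blast
  interpret U: ustr V E \<sigma> M u s \<alpha> by unfold_locales (use a in auto)
  show ?thesis
    apply (rule exI[of _ s], rule exI[of _ \<alpha>], rule exI[of _ U.n], rule exI[of _ u])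
    using us a U.n_ge2[OF ns] U.n_le U.n_le2 U.gen_all U.ann U.topA U.topB U.socA U.socB by blast
qed

end

context bg begin

lemma inj_lt: "s \<in> E \<Longrightarrow> \<alpha> \<in> s \<Longrightarrow> i < val E \<alpha> \<Longrightarrow> j < val E \<alpha> \<Longrightarrow> (\<sigma> \<alpha> ^^ i) s = (\<sigma> \<alpha> ^^ j) s \<Longrightarrow> i = j"
  using cyc_injE[of s \<alpha> i j] cyc_injE[of s \<alpha> j i] by (metis linorder_neqE_nat)

lemma comb:
  assumes sE: "s \<in> E" and q: "(s,\<alpha>) \<in> qarrows E" and q': "(s,\<alpha>') \<in> qarrows E"
    and n: "2 \<le> n" "n \<le> Suc (val E \<alpha>)" and n': "2 \<le> n'" "n' \<le> Suc (val E \<alpha>')"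
    and b: "\<forall>\<beta>. card E \<noteq> 1 \<and> (s,\<beta>) \<in> qarrows E \<and> \<beta> \<noteq> \<alpha> \<longrightarrow> n \<le> val E \<alpha>"
    and b': "\<forall>\<beta>. card E \<noteq> 1 \<and> (s,\<beta>) \<in> qarrows E \<and> \<beta> \<noteq> \<alpha>' \<longrightarrow> n' \<le> val E \<alpha>'"
    and eq: "(\<sigma> \<alpha> ^^ (n - 1)) s = (\<sigma> \<alpha>' ^^ (n' - 1)) s"
  shows "\<alpha> = \<alpha>' \<and> n = n'"
proof (cases "card E = 1")
  case c: True
  have aa: "\<alpha> = \<alpha>'" using q q' c by (simp add: qarrows_def)
  have "E = {s}" using single_edge[OF c] sE by auto
  then have "edges_at E \<alpha> = {s}" using qa_mem[OF q] by (auto simp: edges_at_def)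
  then have "val E \<alpha> = 1" by (simp add: val_def)
  then show ?thesis using aa n n' by simp
next
  case c: False
  have aS: "\<alpha> \<in> s" "\<alpha>' \<in> s" using qa_mem q q' by auto
  show ?thesis
  proof (cases "\<alpha> = \<alpha>'")
    case False
    have nv: "n \<le> val E \<alpha>" using b c q' False by metis
    define t where "t = (\<sigma> \<alpha> ^^ (n - 1)) s"
    have t: "t \<in> E" "\<alpha> \<in> t" using sigpow_in[OF sE aS(1)] t_def by auto
    have "\<alpha>' \<in> t" using sigpow_in[OF sE aS(2)] t_def eq by auto
    then have "t = {\<alpha>, \<alpha>'}" using edge_eq[OF t] False by blast
    moreover have "s = {\<alpha>, \<alpha>'}" using edge_eq[OF sE aS] False by blast
    ultimately have "(\<sigma> \<alpha> ^^ (n - 1)) s = (\<sigma> \<alpha> ^^ 0) s" using t_def by simp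
    moreover have "n - 1 < val E \<alpha>" using nv n by arith
    ultimately have "n - 1 = 0" using inj_lt[OF sE aS(1), of "n-1" 0] val_pos[OF sE aS(1)] by simp
    then show ?thesis using n by simp
  next
    case True
    define v where "v = val E \<alpha>"
    have eq2: "(\<sigma> \<alpha> ^^ (n - 1)) s = (\<sigma> \<alpha> ^^ (n' - 1)) s" using eq True by simp
    have full: "(\<sigma> \<alpha> ^^ v) s = (\<sigma> \<alpha> ^^ 0) s" using cyc_fullE[OF sE aS(1)] v_def by simp
    have vpos: "1 \<le> v" using val_pos[OF sE aS(1)] v_def by simp
    have "n - 1 = n' - 1"
    proof (cases "n - 1 < v \<and> n' - 1 < v")
      case True then show ?thesis using inj_lt[OF sE aS(1)] eq2 v_def by blast
    next
      case False
      then have "n - 1 = v \<or> n' - 1 = v" using n n' True v_def by auto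
      then show ?thesis
      proof
        assume nv: "n - 1 = v"
        then have "(\<sigma> \<alpha> ^^ (n' - 1)) s = (\<sigma> \<alpha> ^^ 0) s" using eq2 full by simp
        then have "\<not> n' - 1 < v" using inj_lt[OF sE aS(1), of "n'-1" 0] vpos n' v_def by auto
        then show ?thesis using nv n' True v_def by simp
      next
        assume nv: "n' - 1 = v"
        then have "(\<sigma> \<alpha> ^^ (n - 1)) s = (\<sigma> \<alpha> ^^ 0) s" using eq2 full by simp
        then have "\<not> n - 1 < v" using inj_lt[OF sE aS(1), of "n-1" 0] vpos n v_def by auto
        then show ?thesis using nv n v_def by simp
      qed
    qed
    then show ?thesis using True n n' by simp
  qed
qed

end


theorem corollary5p2:
  fixes V :: "'v set" and E :: "'v set set" and \<sigma> :: "'v \<Rightarrow> 'v set \<Rightarrow> 'v set"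
    and L :: "('m,'v,'k::field) kqmod" and L' :: "('n,'v,'k) kqmod"
  assumes "brauer_graph_simple_m1 V E \<sigma>"
    and "bga_module E \<sigma> L" and "bga_module E \<sigma> L'"
    and "uniserial E \<sigma> L" and "uniserial E \<sigma> L'"
    and "\<not> simple_mod E \<sigma> L" and "\<not> simple_mod E \<sigma> L'"
    and "\<not> projective_mod E \<sigma> L" and "\<not> projective_mod E \<sigma> L'"
    and "mod_iso E \<sigma> (soc_mod E \<sigma> L) (soc_mod E \<sigma> L')"
    and "mod_iso E \<sigma> (top_mod E \<sigma> L) (top_mod E \<sigma> L')"
  shows "mod_iso E \<sigma> L L'"
proof -
  interpret bg V E \<sigma> by unfold_locales (rule assms(1))
  interpret A: unis V E \<sigma> L by unfold_locales (use assms in \<open>auto simp: bga_module_def\<close>)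
  interpret B: unis V E \<sigma> L' by unfold_locales (use assms in \<open>auto simp: bga_module_def\<close>)
  obtain s \<alpha> n u where S: "s \<in> E" "(s,\<alpha>) \<in> qarrows E" "2 \<le> n" "n \<le> Suc (val E \<alpha>)"
     "\<forall>\<beta>. card E \<noteq> 1 \<and> (s,\<beta>) \<in> qarrows E \<and> \<beta> \<noteq> \<alpha> \<longrightarrow> n \<le> val E \<alpha>"
     "u \<in> carr L" "\<forall>y\<in>carr L. \<exists>f\<in>kq_carrier E \<sigma>. y = mact L u f"
     "\<forall>f\<in>kq_carrier E \<sigma>. \<forall>g\<in>kq_carrier E \<sigma>. (mact L u f = mact L u g) = (\<forall>k<n. f (s, arrs s \<alpha> k) = g (s, arrs s \<alpha> k))"
     "edgeA (top_mod E \<sigma> L) s" "edgeB E (top_mod E \<sigma> L) s"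
     "edgeA (soc_mod E \<sigma> L) ((\<sigma> \<alpha> ^^ (n - 1)) s)" "edgeB E (soc_mod E \<sigma> L) ((\<sigma> \<alpha> ^^ (n - 1)) s)"
    using A.struct[OF assms(6)] by blast
  obtain s' \<alpha>' n' u' where S': "s' \<in> E" "(s',\<alpha>') \<in> qarrows E" "2 \<le> n'" "n' \<le> Suc (val E \<alpha>')"
     "\<forall>\<beta>. card E \<noteq> 1 \<and> (s',\<beta>) \<in> qarrows E \<and> \<beta> \<noteq> \<alpha>' \<longrightarrow> n' \<le> val E \<alpha>'"
     "u' \<in> carr L'" "\<forall>y\<in>carr L'. \<exists>f\<in>kq_carrier E \<sigma>. y = mact L' u' f"
     "\<forall>f\<in>kq_carrier E \<sigma>. \<forall>g\<in>kq_carrier E \<sigma>. (mact L' u' f = mact L' u' g) = (\<forall>k<n'. f (s', arrs s' \<alpha>' k) = g (s', arrs s' \<alpha>' k))"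
     "edgeA (top_mod E \<sigma> L') s'" "edgeB E (top_mod E \<sigma> L') s'"
     "edgeA (soc_mod E \<sigma> L') ((\<sigma> \<alpha>' ^^ (n' - 1)) s')" "edgeB E (soc_mod E \<sigma> L') ((\<sigma> \<alpha>' ^^ (n' - 1)) s')"
    using B.struct[OF assms(7)] by blast
  have ss: "s = s'"
  proof (rule ccontr)
    assume "s \<noteq> s'"
    moreover have "(path_elem (s,[]) :: ('v,'k) kq) \<in> kq_carrier E \<sigma>" by (rule pelem_carrier) (use S(1) in simp)
    ultimately show False using iso_edge[OF assms(11) _ S(1) S(9) S'(10)] by blast
  qed
  define t where "t = (\<sigma> \<alpha> ^^ (n - 1)) s"
  define t' where "t' = (\<sigma> \<alpha>' ^^ (n' - 1)) s'"
  have tE: "t \<in> E" using sigpow_in S(1) qa_mem[OF S(2)] t_def by blast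
  have tt: "t = t'"
  proof (rule ccontr)
    assume "t \<noteq> t'"
    moreover have "(path_elem (t,[]) :: ('v,'k) kq) \<in> kq_carrier E \<sigma>" by (rule pelem_carrier) (use tE in simp)
    ultimately show False using iso_edge[OF assms(10) _ tE] S(11) S'(12) t_def t'_def by blast
  qed
  have q2: "(s,\<alpha>') \<in> qarrows E" using S'(2) ss by simp
  have ab: "\<alpha> = \<alpha>' \<and> n = n'"
    by (rule comb[OF S(1) S(2) q2 S(3) S(4) S'(3) S'(4) S(5)]) (use S'(5) tt ss t_def t'_def in auto)
  show ?thesis
    by (rule iso_build[where P="\<lambda>f g. \<forall>k<n. f (s, arrs s \<alpha> k) = g (s, arrs s \<alpha> k)"])
      (use assms(2,3) S S' ab ss in \<open>auto simp: bga_module_def\<close>)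
qed


end
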